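(* $\mathsf{DT}^2_{4,2}$ implies $\mathsf{ER}^2$.
   Context: Implications are in the sense of reverse mathematics over $\mathsf{RCA}_0$. $\mathsf{DT}^2_{4,2}$: for every $f:[\mathbb Q]^2\to4$ there is $S\subseteq\mathbb Q$ such that $(S,<)$ is a dense linear order without endpoints and $|f([S]^2)|\le2$. $\mathsf{ER}^2$ (Erdős–Rado theorem): for every $f:[\mathbb Q]^2\to2$ there exists $S\subseteq\mathbb Q$ such that either $S$ is infinite and $f$ is constantly $0$ on $[S]^2$, or $(S,<)$ has order type $\mathbb Q$ and $f$ is constantly $1$ on $[S]^2$. *)

theory Defs
  imports Main
begin

text \<open>
  Reverse mathematics over RCA0, rendered semantically: by the completeness
  theorem, RCA0 proves (A implies B) iff every (Henkin) L2-structure that is a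
  model of RCA0 and satisfies A also satisfies B.
\<close>

record 'a l2 =
  n_dom  :: "'a set"
  s_dom  :: "'a set set"
  z_el   :: 'a
  o_el   :: 'a
  addM   :: "'a \<Rightarrow> 'a \<Rightarrow> 'a"
  mulM   :: "'a \<Rightarrow> 'a \<Rightarrow> 'a"
  lessM  :: "'a \<Rightarrow> 'a \<Rightarrow> bool"

datatype tm = V nat | Zt | Ot | Pl tm tm | Ti tm tm

datatype fm =
    Eq tm tm | Lt tm tm | In tm nat
  | Neg fm | Conj fm fm | Disj fm fm
  | BAll nat tm fm | BEx nat tm fm
  | All nat fm | Ex nat fm
  | SAll nat fm | SEx nat fm

fun vars_tm :: "tm \<Rightarrow> nat set" where
  "vars_tm (V i) = {i}"
| "vars_tm Zt = {}"
| "vars_tm Ot = {}"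
| "vars_tm (Pl s t) = vars_tm s \<union> vars_tm t"
| "vars_tm (Ti s t) = vars_tm s \<union> vars_tm t"

fun bounded :: "fm \<Rightarrow> bool" where
  "bounded (Eq s t) = True"
| "bounded (Lt s t) = True"
| "bounded (In t X) = True"
| "bounded (Neg p) = bounded p"
| "bounded (Conj p q) = (bounded p \<and> bounded q)"
| "bounded (Disj p q) = (bounded p \<and> bounded q)"
| "bounded (BAll x t p) = (x \<notin> vars_tm t \<and> bounded p)"
| "bounded (BEx x t p) = (x \<notin> vars_tm t \<and> bounded p)"
| "bounded (All x p) = False"
| "bounded (Ex x p) = False"
| "bounded (SAll X p) = False"
| "bounded (SEx X p) = False"

definition sigma01 :: "fm \<Rightarrow> bool" where
  "sigma01 p \<longleftrightarrow> (\<exists>x q. p = Ex x q \<and> bounded q)"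

definition pi01 :: "fm \<Rightarrow> bool" where
  "pi01 p \<longleftrightarrow> (\<exists>x q. p = All x q \<and> bounded q)"

fun evt :: "'a l2 \<Rightarrow> (nat \<Rightarrow> 'a) \<Rightarrow> tm \<Rightarrow> 'a" where
  "evt M v (V i) = v i"
| "evt M v Zt = z_el M"
| "evt M v Ot = o_el M"
| "evt M v (Pl s t) = addM M (evt M v s) (evt M v t)"
| "evt M v (Ti s t) = mulM M (evt M v s) (evt M v t)"

fun sat :: "'a l2 \<Rightarrow> (nat \<Rightarrow> 'a) \<Rightarrow> (nat \<Rightarrow> 'a set) \<Rightarrow> fm \<Rightarrow> bool" where
  "sat M v w (Eq s t) = (evt M v s = evt M v t)"
| "sat M v w (Lt s t) = lessM M (evt M v s) (evt M v t)"
| "sat M v w (In t X) = (evt M v t \<in> w X)"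
| "sat M v w (Neg p) = (\<not> sat M v w p)"
| "sat M v w (Conj p q) = (sat M v w p \<and> sat M v w q)"
| "sat M v w (Disj p q) = (sat M v w p \<or> sat M v w q)"
| "sat M v w (BAll x t p) =
     (\<forall>a\<in>n_dom M. lessM M a (evt M v t) \<longrightarrow> sat M (v(x := a)) w p)"
| "sat M v w (BEx x t p) =
     (\<exists>a\<in>n_dom M. lessM M a (evt M v t) \<and> sat M (v(x := a)) w p)"
| "sat M v w (All x p) = (\<forall>a\<in>n_dom M. sat M (v(x := a)) w p)"
| "sat M v w (Ex x p) = (\<exists>a\<in>n_dom M. sat M (v(x := a)) w p)"
| "sat M v w (SAll X p) = (\<forall>A\<in>s_dom M. sat M v (w(X := A)) p)"
| "sat M v w (SEx X p) = (\<exists>A\<in>s_dom M. sat M v (w(X := A)) p)"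

section \<open>Models of RCA0 (Simpson, SOSOA, Def. I.7.1 / II.1)\<close>

definition RCA0 :: "'a l2 \<Rightarrow> bool" where
  "RCA0 M \<longleftrightarrow>
    (let N = n_dom M; S = s_dom M; z = z_el M; one1 = o_el M;
         add = addM M; mul = mulM M; lt = lessM M in
     z \<in> N \<and> one1 \<in> N \<and>
     (\<forall>m\<in>N. \<forall>n\<in>N. add m n \<in> N \<and> mul m n \<in> N) \<and>
     (\<forall>A\<in>S. A \<subseteq> N) \<and>
     \<comment> \<open>basic axioms\<close>
     (\<forall>n\<in>N. add n one1 \<noteq> z) \<and>
     (\<forall>m\<in>N. \<forall>n\<in>N. add m one1 = add n one1 \<longrightarrow> m = n) \<and>
     (\<forall>m\<in>N. add m z = m) \<and>
     (\<forall>m\<in>N. \<forall>n\<in>N. add m (add n one1) = add (add m n) one1) \<and>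
     (\<forall>m\<in>N. mul m z = z) \<and>
     (\<forall>m\<in>N. \<forall>n\<in>N. mul m (add n one1) = add (mul m n) m) \<and>
     (\<forall>m\<in>N. \<not> lt m z) \<and>
     (\<forall>m\<in>N. \<forall>n\<in>N. lt m (add n one1) \<longleftrightarrow> (lt m n \<or> m = n)) \<and>
     \<comment> \<open>Sigma-0-1 induction (with arbitrary number and set parameters)\<close>
     (\<forall>p v w i. sigma01 p \<longrightarrow> (\<forall>j. v j \<in> N) \<longrightarrow> (\<forall>j. w j \<in> S) \<longrightarrow>
        sat M (v(i := z)) w p \<longrightarrow>
        (\<forall>n\<in>N. sat M (v(i := n)) w p \<longrightarrow> sat M (v(i := add n one1)) w p) \<longrightarrow>
        (\<forall>n\<in>N. sat M (v(i := n)) w p)) \<and>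
     \<comment> \<open>Delta-0-1 comprehension (with arbitrary parameters)\<close>
     (\<forall>p q v w i. sigma01 p \<longrightarrow> pi01 q \<longrightarrow> (\<forall>j. v j \<in> N) \<longrightarrow> (\<forall>j. w j \<in> S) \<longrightarrow>
        (\<forall>n\<in>N. sat M (v(i := n)) w p \<longleftrightarrow> sat M (v(i := n)) w q) \<longrightarrow>
        {n \<in> N. sat M (v(i := n)) w p} \<in> S))"

definition pairM :: "'a l2 \<Rightarrow> 'a \<Rightarrow> 'a \<Rightarrow> 'a" where
  "pairM M i j = addM M (mulM M (addM M i j) (addM M i j)) i"

fun numM :: "'a l2 \<Rightarrow> nat \<Rightarrow> 'a" where
  "numM M 0 = z_el M"
| "numM M (Suc k) = addM M (numM M k) (o_el M)"

definition dvdM :: "'a l2 \<Rightarrow> 'a \<Rightarrow> 'a \<Rightarrow> bool" where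
  "dvdM M d x \<longleftrightarrow> (\<exists>k\<in>n_dom M. mulM M d k = x)"

text \<open>A rational is coded by the triple \<open>\<langle>\<langle>a,b\<rangle>,c\<rangle>\<close> denoting (a-b)/c,
  with c > 0, a = 0 or b = 0, and (a+b) and c coprime (lowest terms).\<close>
definition QM :: "'a l2 \<Rightarrow> 'a set" where
  "QM M = {q \<in> n_dom M. \<exists>a\<in>n_dom M. \<exists>b\<in>n_dom M. \<exists>c\<in>n_dom M.
      q = pairM M (pairM M a b) c \<and> lessM M (z_el M) c \<and>
      (a = z_el M \<or> b = z_el M) \<and>
      (\<forall>d\<in>n_dom M. lessM M (o_el M) d \<longrightarrow> dvdM M d (addM M a b) \<longrightarrow> \<not> dvdM M d c)}"

text \<open>(a-b)/c < (a'-b')/c'  iff  a c' + b' c < a' c + b c'.\<close>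
definition qltM :: "'a l2 \<Rightarrow> 'a \<Rightarrow> 'a \<Rightarrow> bool" where
  "qltM M q q' \<longleftrightarrow> (\<exists>a\<in>n_dom M. \<exists>b\<in>n_dom M. \<exists>c\<in>n_dom M.
      \<exists>a'\<in>n_dom M. \<exists>b'\<in>n_dom M. \<exists>c'\<in>n_dom M.
      q = pairM M (pairM M a b) c \<and> q' = pairM M (pairM M a' b') c' \<and>
      lessM M (addM M (mulM M a c') (mulM M b' c)) (addM M (mulM M a' c) (mulM M b c')))"

text \<open>\<open>F\<close> (a set of the model) codes a function \<open>[\<rat>]\<^sup>2 \<rightarrow> k\<close>; the unordered
  pair {x,y} is represented by \<open>\<langle>x,y\<rangle>\<close> with x <_Q y; the value c is
  recorded as \<open>\<langle>\<langle>x,y\<rangle>,c\<rangle> \<in> F\<close>.\<close>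
definition colouring :: "'a l2 \<Rightarrow> nat \<Rightarrow> 'a set \<Rightarrow> bool" where
  "colouring M k F \<longleftrightarrow> F \<in> s_dom M \<and>
     (\<forall>p\<in>F. \<exists>x\<in>QM M. \<exists>y\<in>QM M. \<exists>c\<in>n_dom M. qltM M x y \<and>
        lessM M c (numM M k) \<and> p = pairM M (pairM M x y) c) \<and>
     (\<forall>x\<in>QM M. \<forall>y\<in>QM M. qltM M x y \<longrightarrow>
        (\<exists>c\<in>n_dom M. lessM M c (numM M k) \<and> pairM M (pairM M x y) c \<in> F)) \<and>
     (\<forall>x\<in>QM M. \<forall>y\<in>QM M. \<forall>c\<in>n_dom M. \<forall>c'\<in>n_dom M.
        pairM M (pairM M x y) c \<in> F \<longrightarrow> pairM M (pairM M x y) c' \<in> F \<longrightarrow> c = c')"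

definition dloM :: "'a l2 \<Rightarrow> 'a set \<Rightarrow> bool" where
  "dloM M X \<longleftrightarrow> X \<noteq> {} \<and>
     (\<forall>x\<in>X. \<exists>y\<in>X. qltM M y x) \<and> (\<forall>x\<in>X. \<exists>y\<in>X. qltM M x y) \<and>
     (\<forall>x\<in>X. \<forall>y\<in>X. qltM M x y \<longrightarrow> (\<exists>z\<in>X. qltM M x z \<and> qltM M z y))"

definition infiniteM :: "'a l2 \<Rightarrow> 'a set \<Rightarrow> bool" where
  "infiniteM M X \<longleftrightarrow> (\<forall>n\<in>n_dom M. \<exists>x\<in>X. lessM M n x)"

definition homog_col :: "'a l2 \<Rightarrow> 'a set \<Rightarrow> 'a set \<Rightarrow> 'a \<Rightarrow> bool" where
  "homog_col M F X c \<longleftrightarrow>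
     (\<forall>x\<in>X. \<forall>y\<in>X. qltM M x y \<longrightarrow> pairM M (pairM M x y) c \<in> F)"

definition DT2_4_2 :: "'a l2 \<Rightarrow> bool" where
  "DT2_4_2 M \<longleftrightarrow> (\<forall>F. colouring M 4 F \<longrightarrow>
     (\<exists>X\<in>s_dom M. X \<subseteq> QM M \<and> dloM M X \<and>
        (\<exists>c1\<in>n_dom M. \<exists>c2\<in>n_dom M. \<forall>x\<in>X. \<forall>y\<in>X. qltM M x y \<longrightarrow>
           pairM M (pairM M x y) c1 \<in> F \<or> pairM M (pairM M x y) c2 \<in> F)))"

definition ER2 :: "'a l2 \<Rightarrow> bool" where
  "ER2 M \<longleftrightarrow> (\<forall>F. colouring M 2 F \<longrightarrow>
     (\<exists>X\<in>s_dom M. X \<subseteq> QM M \<and>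
        ((infiniteM M X \<and> homog_col M F X (numM M 0)) \<or>
         (dloM M X \<and> homog_col M F X (numM M 1)))))"

end

theory Submission
  imports Defs
begin

locale rca =
  fixes M :: "'a l2" and W0 :: "'a set"
  assumes rca: "RCA0 M" and W0: "W0 \<in> s_dom M"
begin

abbreviation NN where "NN \<equiv> n_dom M"
abbreviation SS where "SS \<equiv> s_dom M"
abbreviation ze where "ze \<equiv> z_el M"
abbreviation on where "on \<equiv> o_el M"
abbreviation pl (infixl "\<oplus>" 65) where "x \<oplus> y \<equiv> addM M x y"
abbreviation ml (infixl "\<otimes>" 70) where "x \<otimes> y \<equiv> mulM M x y"
abbreviation lt (infix "\<prec>" 50) where "x \<prec> y \<equiv> lessM M x y"

lemma zN[simp]: "ze \<in> NN" and oN[simp]: "on \<in> NN"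
  and addN[simp]: "m \<in> NN \<Longrightarrow> n \<in> NN \<Longrightarrow> m \<oplus> n \<in> NN"
  and mulN[simp]: "m \<in> NN \<Longrightarrow> n \<in> NN \<Longrightarrow> m \<otimes> n \<in> NN"
  and SN: "A \<in> SS \<Longrightarrow> A \<subseteq> NN"
  and ax1: "n \<in> NN \<Longrightarrow> n \<oplus> on \<noteq> ze"
  and ax2: "m \<in> NN \<Longrightarrow> n \<in> NN \<Longrightarrow> m \<oplus> on = n \<oplus> on \<Longrightarrow> m = n"
  and ax3: "m \<in> NN \<Longrightarrow> m \<oplus> ze = m"
  and ax4: "m \<in> NN \<Longrightarrow> n \<in> NN \<Longrightarrow> m \<oplus> (n \<oplus> on) = (m \<oplus> n) \<oplus> on"
  and ax5: "m \<in> NN \<Longrightarrow> m \<otimes> ze = ze"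
  and ax6: "m \<in> NN \<Longrightarrow> n \<in> NN \<Longrightarrow> m \<otimes> (n \<oplus> on) = m \<otimes> n \<oplus> m"
  and ax7: "m \<in> NN \<Longrightarrow> \<not> m \<prec> ze"
  and ax8: "m \<in> NN \<Longrightarrow> n \<in> NN \<Longrightarrow> m \<prec> n \<oplus> on \<longleftrightarrow> (m \<prec> n \<or> m = n)"
  using rca unfolding RCA0_def Let_def by auto

lemma ind_ax: "sigma01 p \<Longrightarrow> (\<forall>j. v j \<in> NN) \<Longrightarrow> (\<forall>j. w j \<in> SS) \<Longrightarrow>
        sat M (v(i := ze)) w p \<Longrightarrow>
        (\<forall>n\<in>NN. sat M (v(i := n)) w p \<longrightarrow> sat M (v(i := n \<oplus> on)) w p) \<Longrightarrow>
        (\<forall>n\<in>NN. sat M (v(i := n)) w p)"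
  using rca unfolding RCA0_def Let_def by blast

lemma comp_ax: "sigma01 p \<Longrightarrow> pi01 q \<Longrightarrow> (\<forall>j. v j \<in> NN) \<Longrightarrow> (\<forall>j. w j \<in> SS) \<Longrightarrow>
        (\<forall>n\<in>NN. sat M (v(i := n)) w p \<longleftrightarrow> sat M (v(i := n)) w q) \<Longrightarrow>
        {n \<in> NN. sat M (v(i := n)) w p} \<in> SS"
  using rca unfolding RCA0_def Let_def by blast

lemma induct_fm:
  assumes "bounded q" "\<forall>j. v j \<in> NN" "\<forall>j. w j \<in> SS" "i \<noteq> k"
    and sem: "\<And>n a. n \<in> NN \<Longrightarrow> a \<in> NN \<Longrightarrow> sat M (v(i:=n, k:=a)) w q = P n"
    and "P ze" and "\<And>n. n \<in> NN \<Longrightarrow> P n \<Longrightarrow> P (n \<oplus> on)" and "n \<in> NN"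
  shows "P n"
proof -
  have s: "sat M (v(i:=n)) w (Ex k q) = P n" if "n \<in> NN" for n
    using sem[OF that] by (auto, use zN in blast)
  have "\<forall>n\<in>NN. sat M (v(i := n)) w (Ex k q)"
    apply (rule ind_ax)
    using assms s by (auto simp: sigma01_def)
  thus ?thesis using s assms by auto
qed

lemma comp_fm:
  assumes "bounded q" "\<forall>j. v j \<in> NN" "\<forall>j. w j \<in> SS" "i \<noteq> k"
    and sem: "\<And>n a. n \<in> NN \<Longrightarrow> a \<in> NN \<Longrightarrow> sat M (v(i:=n, k:=a)) w q = P n"
  shows "{n \<in> NN. P n} \<in> SS"
proof -
  have s: "sat M (v(i:=n)) w (Ex k q) = P n" if "n \<in> NN" for n
    using sem[OF that] by (auto, use zN in blast)
  have s2: "sat M (v(i:=n)) w (All k q) = P n" if "n \<in> NN" for n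
    using sem[OF that] using zN by (auto simp del: zN)
  have "{n \<in> NN. sat M (v(i := n)) w (Ex k q)} \<in> SS"
    apply (rule comp_ax[where q="All k q"])
    using assms s s2 by (auto simp: sigma01_def pi01_def)
  moreover have "{n \<in> NN. sat M (v(i := n)) w (Ex k q)} = {n \<in> NN. P n}"
    using s by auto
  ultimately show ?thesis by simp
qed

end

context rca begin

abbreviation le (infix "\<preceq>" 50) where "x \<preceq> y \<equiv> x \<prec> y \<or> x = y"

lemma lt_suc: "m \<in> NN \<Longrightarrow> m \<prec> m \<oplus> on"
  using ax8 by auto

lemma zero_le: "n \<in> NN \<Longrightarrow> ze \<preceq> n"
  apply (rule induct_fm[where q="Disj (Lt Zt (V 0)) (Eq Zt (V 0))" and v="\<lambda>_. ze" and w="\<lambda>_. W0"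
        and i=0 and k=1 and P="\<lambda>n. ze \<preceq> n"])
  by (auto simp: W0 ax8)

lemma suc_mono: assumes "m \<in> NN" "n \<in> NN" "m \<prec> n" shows "m \<oplus> on \<prec> n \<oplus> on"
proof -
  have "m \<prec> n \<longrightarrow> m \<oplus> on \<prec> n \<oplus> on"
    apply (rule induct_fm[where q="Disj (Neg (Lt (V 2) (V 0))) (Lt (Pl (V 2) Ot) (Pl (V 0) Ot))"
          and v="(\<lambda>_. ze)(2:=m)" and w="\<lambda>_. W0" and i=0 and k=1 and P="\<lambda>n. m \<prec> n \<longrightarrow> m \<oplus> on \<prec> n \<oplus> on"])
    using assms(1,2) by (auto simp: W0 ax8 ax7)
  thus ?thesis using assms by auto
qed

lemma lt_trans: assumes "a \<in> NN" "b \<in> NN" "c \<in> NN" "a \<prec> b" "b \<prec> c" shows "a \<prec> c"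
proof -
  have "a \<prec> b \<longrightarrow> b \<prec> c \<longrightarrow> a \<prec> c"
    apply (rule induct_fm[where q="Disj (Neg (Lt (V 2) (V 3))) (Disj (Neg (Lt (V 3) (V 0))) (Lt (V 2) (V 0)))"
          and v="(\<lambda>_. ze)(2:=a, 3:=b)" and w="\<lambda>_. W0" and i=0 and k=1 and P="\<lambda>c. a \<prec> b \<longrightarrow> b \<prec> c \<longrightarrow> a \<prec> c"])
    using assms(1,2,3) by (auto simp: W0 ax8 ax7)
  thus ?thesis using assms by auto
qed

lemma suc_lt_sucD: assumes "m \<in> NN" "n \<in> NN" "m \<oplus> on \<prec> n \<oplus> on" shows "m \<prec> n"
  using assms ax8 lt_suc lt_trans by (metis addN oN)

lemma lt_irrefl: "n \<in> NN \<Longrightarrow> \<not> n \<prec> n"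
  apply (rule induct_fm[where q="Neg (Lt (V 0) (V 0))" and v="\<lambda>_. ze" and w="\<lambda>_. W0"
        and i=0 and k=1 and P="\<lambda>n. \<not> n \<prec> n"])
  by (auto simp: W0 ax7 dest: suc_lt_sucD)

lemma trich: assumes "m \<in> NN" "n \<in> NN" shows "m \<prec> n \<or> m = n \<or> n \<prec> m"
proof -
  have "m \<prec> n \<or> m = n \<or> n \<prec> m"
    apply (rule induct_fm[where q="Disj (Lt (V 2) (V 0)) (Disj (Eq (V 2) (V 0)) (Lt (V 0) (V 2)))"
          and v="(\<lambda>_. ze)(2:=m)" and w="\<lambda>_. W0" and i=0 and k=1 and P="\<lambda>n. m \<prec> n \<or> m = n \<or> n \<prec> m"])
    using assms apply (auto simp: W0 ax8 ax7 dest: zero_le)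
    apply (metis addN ax8 oN suc_mono)+
    done
  thus ?thesis .
qed

lemma lt_asym: "a \<in> NN \<Longrightarrow> b \<in> NN \<Longrightarrow> a \<prec> b \<Longrightarrow> \<not> b \<prec> a"
  using lt_trans lt_irrefl by blast

lemma not_lt: "a \<in> NN \<Longrightarrow> b \<in> NN \<Longrightarrow> \<not> a \<prec> b \<longleftrightarrow> b \<preceq> a"
  using trich lt_asym lt_irrefl by blast

lemma le_trans: "a \<in> NN \<Longrightarrow> b \<in> NN \<Longrightarrow> c \<in> NN \<Longrightarrow> a \<preceq> b \<Longrightarrow> b \<preceq> c \<Longrightarrow> a \<preceq> c"
  using lt_trans by blast
lemma le_lt_trans: "a \<in> NN \<Longrightarrow> b \<in> NN \<Longrightarrow> c \<in> NN \<Longrightarrow> a \<preceq> b \<Longrightarrow> b \<prec> c \<Longrightarrow> a \<prec> c"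
  using lt_trans by blast
lemma lt_le_trans: "a \<in> NN \<Longrightarrow> b \<in> NN \<Longrightarrow> c \<in> NN \<Longrightarrow> a \<prec> b \<Longrightarrow> b \<preceq> c \<Longrightarrow> a \<prec> c"
  using lt_trans by blast

lemma zero_or_suc: assumes "n \<in> NN" shows "n = ze \<or> (\<exists>k\<in>NN. n = k \<oplus> on)"
proof -
  have "n = ze \<or> (\<exists>k\<in>NN. k \<prec> n \<and> n = k \<oplus> on)"
    apply (rule induct_fm[where q="Disj (Eq (V 0) Zt) (BEx 2 (V 0) (Eq (V 0) (Pl (V 2) Ot)))"
          and v="\<lambda>_. ze" and w="\<lambda>_. W0" and i=0 and k=1 and P="\<lambda>n. n = ze \<or> (\<exists>k\<in>NN. k \<prec> n \<and> n = k \<oplus> on)"])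
    using assms apply (simp_all add: W0)
    using lt_suc by blast
  thus ?thesis by blast
qed

lemma lt_suc_iff: "m \<in> NN \<Longrightarrow> n \<in> NN \<Longrightarrow> m \<prec> n \<oplus> on \<longleftrightarrow> m \<preceq> n"
  using ax8 by blast

lemma lt_iff_suc_le: assumes "m \<in> NN" "n \<in> NN" shows "m \<prec> n \<longleftrightarrow> m \<oplus> on \<preceq> n"
  by (metis addN assms ax8 lt_suc lt_trans oN suc_mono)

lemma add_0_left[simp]: "n \<in> NN \<Longrightarrow> ze \<oplus> n = n"
  apply (rule induct_fm[where q="Eq (Pl Zt (V 0)) (V 0)" and v="\<lambda>_. ze" and w="\<lambda>_. W0"
        and i=0 and k=1 and P="\<lambda>n. ze \<oplus> n = n"])
  by (auto simp: W0 ax3 ax4)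

lemma add_suc_left: assumes "m \<in> NN" "n \<in> NN" shows "(m \<oplus> on) \<oplus> n = (m \<oplus> n) \<oplus> on"
proof -
  show ?thesis
    apply (rule induct_fm[where q="Eq (Pl (Pl (V 2) Ot) (V 0)) (Pl (Pl (V 2) (V 0)) Ot)"
          and v="(\<lambda>_. ze)(2:=m)" and w="\<lambda>_. W0" and i=0 and k=1 and P="\<lambda>n. (m \<oplus> on) \<oplus> n = (m \<oplus> n) \<oplus> on"])
    using assms by (auto simp: W0 ax3 ax4)
qed

lemma add_comm: assumes "m \<in> NN" "n \<in> NN" shows "m \<oplus> n = n \<oplus> m"
    apply (rule induct_fm[where q="Eq (Pl (V 2) (V 0)) (Pl (V 0) (V 2))"
          and v="(\<lambda>_. ze)(2:=m)" and w="\<lambda>_. W0" and i=0 and k=1 and P="\<lambda>n. m \<oplus> n = n \<oplus> m"])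
    using assms by (auto simp: W0 ax3 ax4 add_suc_left)

lemma add_assoc: assumes "a \<in> NN" "b \<in> NN" "c \<in> NN" shows "(a \<oplus> b) \<oplus> c = a \<oplus> (b \<oplus> c)"
    apply (rule induct_fm[where q="Eq (Pl (Pl (V 2) (V 3)) (V 0)) (Pl (V 2) (Pl (V 3) (V 0)))"
          and v="(\<lambda>_. ze)(2:=a,3:=b)" and w="\<lambda>_. W0" and i=0 and k=1 and P="\<lambda>c. (a \<oplus> b) \<oplus> c = a \<oplus> (b \<oplus> c)"])
    using assms by (auto simp: W0 ax3 ax4)

lemma add_left_comm: assumes "a \<in> NN" "b \<in> NN" "c \<in> NN" shows "a \<oplus> (b \<oplus> c) = b \<oplus> (a \<oplus> c)"
  by (metis add_assoc add_comm assms)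

lemmas add_ac = add_assoc add_comm add_left_comm

lemma add_lt_mono: assumes "a \<in> NN" "b \<in> NN" "c \<in> NN" "a \<prec> b" shows "a \<oplus> c \<prec> b \<oplus> c"
proof -
  have "a \<prec> b \<longrightarrow> a \<oplus> c \<prec> b \<oplus> c"
    apply (rule induct_fm[where q="Disj (Neg (Lt (V 2) (V 3))) (Lt (Pl (V 2) (V 0)) (Pl (V 3) (V 0)))"
          and v="(\<lambda>_. ze)(2:=a,3:=b)" and w="\<lambda>_. W0" and i=0 and k=1 and P="\<lambda>c. a \<prec> b \<longrightarrow> a \<oplus> c \<prec> b \<oplus> c"])
    using assms(1,2,3) by (auto simp: W0 ax3 ax4 suc_mono)
  thus ?thesis using assms by simp
qed

lemma add_lt_cancel: assumes "a \<in> NN" "b \<in> NN" "c \<in> NN" shows "a \<oplus> c \<prec> b \<oplus> c \<longleftrightarrow> a \<prec> b"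
  by (metis add_lt_mono addN assms lt_asym lt_irrefl trich)

lemma add_cancel: assumes "a \<in> NN" "b \<in> NN" "c \<in> NN" shows "a \<oplus> c = b \<oplus> c \<longleftrightarrow> a = b"
  by (metis add_lt_mono addN assms lt_irrefl trich)

lemma add_lt_cancel_left: assumes "a \<in> NN" "b \<in> NN" "c \<in> NN" shows "c \<oplus> a \<prec> c \<oplus> b \<longleftrightarrow> a \<prec> b"
  using add_lt_cancel add_comm assms by metis

lemma add_cancel_left: assumes "a \<in> NN" "b \<in> NN" "c \<in> NN" shows "c \<oplus> a = c \<oplus> b \<longleftrightarrow> a = b"
  using add_cancel add_comm assms by metis

lemma le_add: assumes "a \<in> NN" "b \<in> NN" shows "a \<preceq> a \<oplus> b"
    apply (rule induct_fm[where q="Disj (Lt (V 2) (Pl (V 2) (V 0))) (Eq (V 2) (Pl (V 2) (V 0)))"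
          and v="(\<lambda>_. ze)(2:=a)" and w="\<lambda>_. W0" and i=0 and k=1 and P="\<lambda>b. a \<preceq> a \<oplus> b"])
    using assms by (auto simp: W0 ax3 ax4 ax8)

lemma le_add2: assumes "a \<in> NN" "b \<in> NN" shows "a \<preceq> b \<oplus> a"
  using le_add add_comm assms by metis

lemma add_le_mono: "u \<in> NN \<Longrightarrow> v \<in> NN \<Longrightarrow> u' \<in> NN \<Longrightarrow> v' \<in> NN \<Longrightarrow> u \<preceq> v \<Longrightarrow> u' \<preceq> v' \<Longrightarrow> u \<oplus> u' \<preceq> v \<oplus> v'"
  by (smt (verit) add_comm add_lt_mono addN lt_trans)

lemma add_le_lt_mono: "u \<in> NN \<Longrightarrow> v \<in> NN \<Longrightarrow> u' \<in> NN \<Longrightarrow> v' \<in> NN \<Longrightarrow> u \<preceq> v \<Longrightarrow> u' \<prec> v' \<Longrightarrow> u \<oplus> u' \<prec> v \<oplus> v'"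
  by (smt (verit) add_comm add_lt_mono addN lt_trans)

end

context rca begin

lemma mul_0_left[simp]: "n \<in> NN \<Longrightarrow> ze \<otimes> n = ze"
  apply (rule induct_fm[where q="Eq (Ti Zt (V 0)) Zt" and v="\<lambda>_. ze" and w="\<lambda>_. W0"
        and i=0 and k=1 and P="\<lambda>n. ze \<otimes> n = ze"])
  by (auto simp: W0 ax3 ax5 ax6)

lemma mul_suc_left: assumes "m \<in> NN" "n \<in> NN" shows "(m \<oplus> on) \<otimes> n = m \<otimes> n \<oplus> n"
    apply (rule induct_fm[where q="Eq (Ti (Pl (V 2) Ot) (V 0)) (Pl (Ti (V 2) (V 0)) (V 0))"
          and v="(\<lambda>_. ze)(2:=m)" and w="\<lambda>_. W0" and i=0 and k=1 and P="\<lambda>n. (m \<oplus> on) \<otimes> n = m \<otimes> n \<oplus> n"])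
    using assms by (auto simp: W0 ax3 ax5 ax6 add_ac)

lemma mul_comm: assumes "m \<in> NN" "n \<in> NN" shows "m \<otimes> n = n \<otimes> m"
    apply (rule induct_fm[where q="Eq (Ti (V 2) (V 0)) (Ti (V 0) (V 2))"
          and v="(\<lambda>_. ze)(2:=m)" and w="\<lambda>_. W0" and i=0 and k=1 and P="\<lambda>n. m \<otimes> n = n \<otimes> m"])
    using assms by (auto simp: W0 ax3 ax5 ax6 mul_suc_left)

lemma distrib: assumes "a \<in> NN" "b \<in> NN" "c \<in> NN" shows "a \<otimes> (b \<oplus> c) = a \<otimes> b \<oplus> a \<otimes> c"
proof -
  have step: "a \<otimes> (b \<oplus> (c \<oplus> on)) = a \<otimes> b \<oplus> a \<otimes> (c \<oplus> on)"
    if "c \<in> NN" "a \<otimes> (b \<oplus> c) = a \<otimes> b \<oplus> a \<otimes> c" for c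
  proof -
    have "a \<otimes> (b \<oplus> (c \<oplus> on)) = a \<otimes> ((b \<oplus> c) \<oplus> on)" using ax4 assms that by simp
    also have "\<dots> = (a \<otimes> b \<oplus> a \<otimes> c) \<oplus> a" using ax6 assms that by simp
    also have "\<dots> = a \<otimes> b \<oplus> (a \<otimes> c \<oplus> a)" using add_assoc assms that by simp
    also have "\<dots> = a \<otimes> b \<oplus> a \<otimes> (c \<oplus> on)" using ax6 assms that by simp
    finally show ?thesis .
  qed
  show ?thesis
    apply (rule induct_fm[where q="Eq (Ti (V 2) (Pl (V 3) (V 0))) (Pl (Ti (V 2) (V 3)) (Ti (V 2) (V 0)))"
          and v="(\<lambda>_. ze)(2:=a,3:=b)" and w="\<lambda>_. W0" and i=0 and k=1 and P="\<lambda>c. a \<otimes> (b \<oplus> c) = a \<otimes> b \<oplus> a \<otimes> c"])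
    using assms step by (auto simp: W0 ax3 ax5)
qed

lemma distrib2: assumes "a \<in> NN" "b \<in> NN" "c \<in> NN" shows "(b \<oplus> c) \<otimes> a = b \<otimes> a \<oplus> c \<otimes> a"
proof -
  have "(b \<oplus> c) \<otimes> a = a \<otimes> (b \<oplus> c)" using assms mul_comm[of "b \<oplus> c" a] by simp
  also have "\<dots> = a \<otimes> b \<oplus> a \<otimes> c" using distrib assms by simp
  also have "\<dots> = b \<otimes> a \<oplus> c \<otimes> a" using mul_comm[of a b] mul_comm[of a c] assms by simp
  finally show ?thesis .
qed

lemma mul_1[simp]: "a \<otimes> on = a" if "a \<in> NN"
proof -
  have "a \<otimes> (ze \<oplus> on) = a \<otimes> ze \<oplus> a" by (rule ax6) (simp_all add: that)
  thus ?thesis using that ax5 by simp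
qed

lemma mul_assoc: assumes "a \<in> NN" "b \<in> NN" "c \<in> NN" shows "(a \<otimes> b) \<otimes> c = a \<otimes> (b \<otimes> c)"
    apply (rule induct_fm[where q="Eq (Ti (Ti (V 2) (V 3)) (V 0)) (Ti (V 2) (Ti (V 3) (V 0)))"
          and v="(\<lambda>_. ze)(2:=a,3:=b)" and w="\<lambda>_. W0" and i=0 and k=1 and P="\<lambda>c. (a \<otimes> b) \<otimes> c = a \<otimes> (b \<otimes> c)"])
    using assms by (auto simp: W0 ax5 ax6 distrib mul_1)

lemma mul_left_comm: assumes "a \<in> NN" "b \<in> NN" "c \<in> NN" shows "a \<otimes> (b \<otimes> c) = b \<otimes> (a \<otimes> c)"
proof -
  have "a \<otimes> (b \<otimes> c) = (a \<otimes> b) \<otimes> c" using mul_assoc assms by simp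
  also have "\<dots> = (b \<otimes> a) \<otimes> c" using mul_comm[of a b] assms by simp
  also have "\<dots> = b \<otimes> (a \<otimes> c)" using mul_assoc assms by simp
  finally show ?thesis .
qed

lemmas mul_ac = mul_assoc mul_comm mul_left_comm

lemma mul_le_mono: assumes "a \<in> NN" "b \<in> NN" "c \<in> NN" "a \<preceq> b" shows "a \<otimes> c \<preceq> b \<otimes> c"
proof -
  have "a \<preceq> b \<longrightarrow> a \<otimes> c \<preceq> b \<otimes> c"
    apply (rule induct_fm[where q="Disj (Neg (Disj (Lt (V 2) (V 3)) (Eq (V 2) (V 3)))) (Disj (Lt (Ti (V 2) (V 0)) (Ti (V 3) (V 0))) (Eq (Ti (V 2) (V 0)) (Ti (V 3) (V 0))))"
          and v="(\<lambda>_. ze)(2:=a,3:=b)" and w="\<lambda>_. W0" and i=0 and k=1 and P="\<lambda>c. a \<preceq> b \<longrightarrow> a \<otimes> c \<preceq> b \<otimes> c"])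
    using assms(1,2,3) add_le_mono by (auto simp: W0 ax5 ax6)
  thus ?thesis using assms by simp
qed

lemma mul_lt_mono: assumes "a \<in> NN" "b \<in> NN" "c \<in> NN" "a \<prec> b" "ze \<prec> c" shows "a \<otimes> c \<prec> b \<otimes> c"
proof -
  obtain k where k: "k \<in> NN" "c = k \<oplus> on" using zero_or_suc assms lt_irrefl by blast
  have "a \<otimes> k \<preceq> b \<otimes> k" using mul_le_mono assms k by blast
  hence "a \<otimes> k \<oplus> a \<prec> b \<otimes> k \<oplus> b" using add_le_lt_mono assms k by simp
  thus ?thesis using k assms by (simp add: ax6)
qed

lemma mul_lt_cancel: assumes "a \<in> NN" "b \<in> NN" "c \<in> NN" "ze \<prec> c" shows "a \<otimes> c \<prec> b \<otimes> c \<longleftrightarrow> a \<prec> b"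
  by (metis assms mulN mul_lt_mono mul_le_mono not_lt)

lemma mul_le_cancel: assumes "a \<in> NN" "b \<in> NN" "c \<in> NN" "ze \<prec> c" shows "a \<otimes> c \<preceq> b \<otimes> c \<longleftrightarrow> a \<preceq> b"
  by (metis assms mulN mul_lt_mono mul_le_mono not_lt)

end

context rca begin

lemmas acs = distrib distrib2 mul_assoc add_assoc mul_comm mul_left_comm add_comm add_left_comm

abbreviation pr where "pr i j \<equiv> pairM M i j"

lemma prN[simp]: "i \<in> NN \<Longrightarrow> j \<in> NN \<Longrightarrow> pr i j \<in> NN"
  by (simp add: pairM_def)

lemma le_pr1: "i \<in> NN \<Longrightarrow> j \<in> NN \<Longrightarrow> i \<preceq> pr i j"
  unfolding pairM_def using le_add2 by simp

lemma on_le: assumes "k \<in> NN" shows "on \<preceq> k \<oplus> on"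
proof -
  have "ze \<oplus> on \<preceq> k \<oplus> on" using add_le_mono[of ze k on on] zero_le[of k] assms by simp
  thus ?thesis by simp
qed

lemma le_sq: assumes "s \<in> NN" shows "s \<preceq> s \<otimes> s"
proof -
  from zero_or_suc[OF assms] show ?thesis
  proof
    assume "s = ze" thus ?thesis by (simp add: ax5)
  next
    assume "\<exists>k\<in>NN. s = k \<oplus> on"
    then obtain k where k: "k \<in> NN" "s = k \<oplus> on" by blast
    hence "on \<otimes> s \<preceq> s \<otimes> s" using mul_le_mono[of on s s] on_le[of k] by simp
    thus ?thesis using mul_comm[of on s] assms by simp
  qed
qed

lemma le_pr2: assumes "i \<in> NN" "j \<in> NN" shows "j \<preceq> pr i j"
proof -
  have "j \<preceq> i \<oplus> j" using le_add2 assms by simp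
  moreover have "i \<oplus> j \<preceq> (i \<oplus> j) \<otimes> (i \<oplus> j)" using le_sq assms by simp
  moreover have "(i \<oplus> j) \<otimes> (i \<oplus> j) \<preceq> pr i j" unfolding pairM_def using le_add assms by simp
  ultimately show ?thesis using assms le_trans[of j "i \<oplus> j" "(i \<oplus> j) \<otimes> (i \<oplus> j)"]
      le_trans[of j "(i \<oplus> j) \<otimes> (i \<oplus> j)" "pr i j"] by simp
qed

lemma sq_mono: assumes "a \<in> NN" "b \<in> NN" "a \<preceq> b" shows "a \<otimes> a \<preceq> b \<otimes> b"
proof -
  have "a \<otimes> a \<preceq> b \<otimes> a" using mul_le_mono assms by simp
  moreover have "a \<otimes> b \<preceq> b \<otimes> b" using mul_le_mono assms by simp
  ultimately show ?thesis using mul_comm[of a b] assms le_trans[of "a \<otimes> a" "b \<otimes> a" "b \<otimes> b"] by simp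
qed

lemma lt_add_suc: assumes "x \<in> NN" "y \<in> NN" shows "x \<prec> x \<oplus> (y \<oplus> on)"
proof -
  have "x \<preceq> x \<oplus> y" using le_add assms by simp
  moreover have "x \<oplus> y \<prec> (x \<oplus> y) \<oplus> on" using lt_suc assms by simp
  ultimately show ?thesis using assms ax4 le_lt_trans[of x "x \<oplus> y" "(x \<oplus> y) \<oplus> on"] by simp
qed

lemma pr_lt: assumes N: "i \<in> NN" "j \<in> NN" "i' \<in> NN" "j' \<in> NN" and lt: "i \<oplus> j \<prec> i' \<oplus> j'"
  shows "pr i j \<prec> pr i' j'"
proof -
  define s where "s = i \<oplus> j"
  define s' where "s' = i' \<oplus> j'"
  have sN: "s \<in> NN" "s' \<in> NN" using N s_def s'_def by auto
  have "i \<preceq> s" using le_add N s_def by simp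
  hence 1: "s \<otimes> s \<oplus> i \<preceq> s \<otimes> s \<oplus> s" using add_le_mono[of "s \<otimes> s" "s \<otimes> s" i s] sN N by simp
  have 2: "s \<otimes> s \<oplus> s \<prec> (s \<otimes> s \<oplus> s) \<oplus> (s \<oplus> on)" using lt_add_suc sN by simp
  have 3: "(s \<otimes> s \<oplus> s) \<oplus> (s \<oplus> on) = (s \<oplus> on) \<otimes> (s \<oplus> on)"
    using sN by (simp add: ax6 mul_suc_left add_assoc)
  have "s \<oplus> on \<preceq> s'" using lt lt_iff_suc_le sN s_def s'_def by simp
  hence 4: "(s \<oplus> on) \<otimes> (s \<oplus> on) \<preceq> s' \<otimes> s'" using sq_mono sN by simp
  have 5: "s' \<otimes> s' \<preceq> s' \<otimes> s' \<oplus> i'" using le_add sN N by simp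
  have "s \<otimes> s \<oplus> i \<prec> s' \<otimes> s' \<oplus> i'"
  proof -
    have "s \<otimes> s \<oplus> i \<prec> (s \<oplus> on) \<otimes> (s \<oplus> on)" using 1 2 3 le_lt_trans[of "s \<otimes> s \<oplus> i" "s \<otimes> s \<oplus> s"] sN N by simp
    moreover have "(s \<oplus> on) \<otimes> (s \<oplus> on) \<preceq> s' \<otimes> s' \<oplus> i'" using 4 5 le_trans[of _ "s' \<otimes> s'"] sN N by simp
    ultimately show ?thesis using lt_le_trans[of "s \<otimes> s \<oplus> i" "(s \<oplus> on) \<otimes> (s \<oplus> on)"] sN N by simp
  qed
  thus ?thesis unfolding pairM_def s_def s'_def .
qed

lemma pr_inj: assumes N: "i \<in> NN" "j \<in> NN" "i' \<in> NN" "j' \<in> NN" and eq: "pr i j = pr i' j'"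
  shows "i = i' \<and> j = j'"
proof -
  have "i \<oplus> j = i' \<oplus> j'"
    using trich[of "i \<oplus> j" "i' \<oplus> j'"] pr_lt[OF N] pr_lt[of i' j' i j] N eq lt_irrefl[of "pr i j"] by auto
  moreover hence "i = i'" using eq add_cancel_left N unfolding pairM_def by simp
  ultimately show ?thesis using add_cancel_left N by simp
qed

lemma pr_eq_iff: "i \<in> NN \<Longrightarrow> j \<in> NN \<Longrightarrow> i' \<in> NN \<Longrightarrow> j' \<in> NN \<Longrightarrow> pr i j = pr i' j' \<longleftrightarrow> i = i' \<and> j = j'"
  using pr_inj by blast

lemma numN[simp]: "numM M k \<in> NN"
  by (induct k) auto

lemma num_lt: "j < k \<Longrightarrow> numM M j \<prec> numM M k"
proof (induct k)
  case 0 thus ?case by simp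
next
  case (Suc k) thus ?case using ax8[of "numM M j" "numM M k"] by (auto simp: less_Suc_eq)
qed

lemma num_inj: "numM M j = numM M k \<longleftrightarrow> j = k"
  by (metis lt_irrefl numN num_lt nat_neq_iff)

lemma lt_num_Suc: "c \<in> NN \<Longrightarrow> c \<prec> numM M (Suc k) \<longleftrightarrow> c \<prec> numM M k \<or> c = numM M k"
  using ax8 by simp

lemma lt_num2: "c \<in> NN \<Longrightarrow> c \<prec> numM M 2 \<longleftrightarrow> c = numM M 0 \<or> c = numM M 1"
  using lt_num_Suc[of c 1] lt_num_Suc[of c 0] ax7 by (auto simp: numeral_2_eq_2)

lemma lt_num4: "c \<in> NN \<Longrightarrow> c \<prec> numM M 4 \<longleftrightarrow> c = numM M 0 \<or> c = numM M 1 \<or> c = numM M 2 \<or> c = numM M 3"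
  using lt_num_Suc[of c 3] lt_num_Suc[of c 2] lt_num_Suc[of c 1] lt_num_Suc[of c 0] ax7
  by (auto simp: numeral_eq_Suc)

lemma num_add2: "numM M k \<oplus> on \<oplus> on = numM M (Suc (Suc k))"
  by simp

lemma core_ident:
  assumes N: "a \<in> NN" "b \<in> NN" "c \<in> NN" "a' \<in> NN" "b' \<in> NN" "c' \<in> NN" "a'' \<in> NN" "b'' \<in> NN" "c'' \<in> NN"
  shows "(a \<otimes> c' \<oplus> b' \<otimes> c) \<otimes> c'' \<oplus> (a' \<otimes> c'' \<oplus> b'' \<otimes> c') \<otimes> c
       = (a \<otimes> c'' \<oplus> b'' \<otimes> c) \<otimes> c' \<oplus> (a' \<oplus> b') \<otimes> (c \<otimes> c'')"
    and "(a' \<otimes> c \<oplus> b \<otimes> c') \<otimes> c'' \<oplus> (a'' \<otimes> c' \<oplus> b' \<otimes> c'') \<otimes> c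
       = (a'' \<otimes> c \<oplus> b \<otimes> c'') \<otimes> c' \<oplus> (a' \<oplus> b') \<otimes> (c \<otimes> c'')"
  using N by (simp_all add: acs)

lemma core_trans:
  assumes N: "a \<in> NN" "b \<in> NN" "c \<in> NN" "a' \<in> NN" "b' \<in> NN" "c' \<in> NN" "a'' \<in> NN" "b'' \<in> NN" "c'' \<in> NN"
    and P: "ze \<prec> c" "ze \<prec> c'" "ze \<prec> c''"
    and h1: "a \<otimes> c' \<oplus> b' \<otimes> c \<prec> a' \<otimes> c \<oplus> b \<otimes> c'"
    and h2: "a' \<otimes> c'' \<oplus> b'' \<otimes> c' \<prec> a'' \<otimes> c' \<oplus> b' \<otimes> c''"
  shows "a \<otimes> c'' \<oplus> b'' \<otimes> c \<prec> a'' \<otimes> c \<oplus> b \<otimes> c''"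
proof -
  have "(a \<otimes> c' \<oplus> b' \<otimes> c) \<otimes> c'' \<prec> (a' \<otimes> c \<oplus> b \<otimes> c') \<otimes> c''" using mul_lt_mono h1 N P by simp
  moreover have "(a' \<otimes> c'' \<oplus> b'' \<otimes> c') \<otimes> c \<prec> (a'' \<otimes> c' \<oplus> b' \<otimes> c'') \<otimes> c" using mul_lt_mono h2 N P by simp
  ultimately have "(a \<otimes> c' \<oplus> b' \<otimes> c) \<otimes> c'' \<oplus> (a' \<otimes> c'' \<oplus> b'' \<otimes> c') \<otimes> c \<prec>
     (a' \<otimes> c \<oplus> b \<otimes> c') \<otimes> c'' \<oplus> (a'' \<otimes> c' \<oplus> b' \<otimes> c'') \<otimes> c"
    using add_le_lt_mono N by simp
  hence "(a \<otimes> c'' \<oplus> b'' \<otimes> c) \<otimes> c' \<oplus> (a' \<oplus> b') \<otimes> (c \<otimes> c'') \<prec> (a'' \<otimes> c \<oplus> b \<otimes> c'') \<otimes> c' \<oplus> (a' \<oplus> b') \<otimes> (c \<otimes> c'')"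
    using core_ident[OF N] by simp
  thus ?thesis using add_lt_cancel mul_lt_cancel N P by simp
qed

lemma core_neg:
  assumes N: "a \<in> NN" "b \<in> NN" "c \<in> NN" "a' \<in> NN" "b' \<in> NN" "c' \<in> NN" "a'' \<in> NN" "b'' \<in> NN" "c'' \<in> NN"
    and P: "ze \<prec> c" "ze \<prec> c'" "ze \<prec> c''"
    and h1: "\<not> a \<otimes> c' \<oplus> b' \<otimes> c \<prec> a' \<otimes> c \<oplus> b \<otimes> c'"
    and h2: "\<not> a' \<otimes> c'' \<oplus> b'' \<otimes> c' \<prec> a'' \<otimes> c' \<oplus> b' \<otimes> c''"
  shows "\<not> a \<otimes> c'' \<oplus> b'' \<otimes> c \<prec> a'' \<otimes> c \<oplus> b \<otimes> c''"
proof -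
  have "(a' \<otimes> c \<oplus> b \<otimes> c') \<otimes> c'' \<preceq> (a \<otimes> c' \<oplus> b' \<otimes> c) \<otimes> c''" using mul_le_mono h1 N P not_lt by simp
  moreover have "(a'' \<otimes> c' \<oplus> b' \<otimes> c'') \<otimes> c \<preceq> (a' \<otimes> c'' \<oplus> b'' \<otimes> c') \<otimes> c" using mul_le_mono h2 N P not_lt by simp
  ultimately have "(a' \<otimes> c \<oplus> b \<otimes> c') \<otimes> c'' \<oplus> (a'' \<otimes> c' \<oplus> b' \<otimes> c'') \<otimes> c \<preceq>
     (a \<otimes> c' \<oplus> b' \<otimes> c) \<otimes> c'' \<oplus> (a' \<otimes> c'' \<oplus> b'' \<otimes> c') \<otimes> c"
    using add_le_mono N by simp
  hence "(a'' \<otimes> c \<oplus> b \<otimes> c'') \<otimes> c' \<oplus> (a' \<oplus> b') \<otimes> (c \<otimes> c'') \<preceq> (a \<otimes> c'' \<oplus> b'' \<otimes> c) \<otimes> c' \<oplus> (a' \<oplus> b') \<otimes> (c \<otimes> c'')"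
    using core_ident[OF N] by simp
  hence "(a'' \<otimes> c \<oplus> b \<otimes> c'') \<otimes> c' \<preceq> (a \<otimes> c'' \<oplus> b'' \<otimes> c) \<otimes> c'"
    using add_lt_cancel add_cancel N by simp
  hence "a'' \<otimes> c \<oplus> b \<otimes> c'' \<preceq> a \<otimes> c'' \<oplus> b'' \<otimes> c"
    using mul_le_cancel N P by simp
  thus ?thesis using not_lt N by simp
qed

end

definition prT :: "tm \<Rightarrow> tm \<Rightarrow> tm" where
  "prT s t = Pl (Ti (Pl s t) (Pl s t)) s"

lemma evt_prT[simp]: "evt M v (prT s t) = pairM M (evt M v s) (evt M v t)"
  by (simp add: prT_def pairM_def)

lemma vars_prT[simp]: "vars_tm (prT s t) = vars_tm s \<union> vars_tm t"
  by (auto simp: prT_def)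

definition qF :: fm where
  "qF = BEx 4 (Pl (V 2) Ot) (BEx 5 (Pl (V 2) Ot) (BEx 6 (Pl (V 2) Ot) (BEx 7 (Pl (V 3) Ot) (BEx 8 (Pl (V 3) Ot) (BEx 9 (Pl (V 3) Ot)
  (Conj (Eq (V 2) (prT (prT (V 4) (V 5)) (V 6))) (Conj (Eq (V 3) (prT (prT (V 7) (V 8)) (V 9)))
     (Lt (Pl (Ti (V 4) (V 9)) (Ti (V 8) (V 6))) (Pl (Ti (V 7) (V 6)) (Ti (V 5) (V 9)))))))))))"

lemma bounded_qF[simp]: "bounded qF" by (simp add: qF_def)

context rca begin

lemma le_code: assumes "a \<in> NN" "b \<in> NN" "c \<in> NN"
  shows "a \<preceq> pr (pr a b) c" "b \<preceq> pr (pr a b) c" "c \<preceq> pr (pr a b) c"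
  using le_pr1 le_pr2 le_trans assms by (metis prN)+

lemma qF_sem: assumes "v 2 \<in> NN" "v 3 \<in> NN"
  shows "sat M v w qF \<longleftrightarrow> qltM M (v 2) (v 3)"
proof
  assume "sat M v w qF"
  thus "qltM M (v 2) (v 3)" unfolding qF_def qltM_def by auto blast
next
  assume "qltM M (v 2) (v 3)"
  then obtain a b c a' b' c' where N: "a \<in> NN" "b \<in> NN" "c \<in> NN" "a' \<in> NN" "b' \<in> NN" "c' \<in> NN"
    and e: "v 2 = pr (pr a b) c" "v 3 = pr (pr a' b') c'"
    and l: "a \<otimes> c' \<oplus> b' \<otimes> c \<prec> a' \<otimes> c \<oplus> b \<otimes> c'"
    unfolding qltM_def by blast
  have b: "a \<prec> v 2 \<oplus> on" "b \<prec> v 2 \<oplus> on" "c \<prec> v 2 \<oplus> on" "a' \<prec> v 3 \<oplus> on" "b' \<prec> v 3 \<oplus> on" "c' \<prec> v 3 \<oplus> on"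
    using le_code N e assms lt_suc_iff by auto
  show "sat M v w qF" unfolding qF_def using N e l b
    apply simp
    by blast
qed

lemma QM_code: "x \<in> QM M \<Longrightarrow> \<exists>a b c. a \<in> NN \<and> b \<in> NN \<and> c \<in> NN \<and> x = pr (pr a b) c \<and> ze \<prec> c"
  unfolding QM_def by blast

lemma QM_N: "x \<in> QM M \<Longrightarrow> x \<in> NN"
  unfolding QM_def by blast

lemma qlt_code: assumes "a \<in> NN" "b \<in> NN" "c \<in> NN" "a' \<in> NN" "b' \<in> NN" "c' \<in> NN"
  shows "qltM M (pr (pr a b) c) (pr (pr a' b') c') \<longleftrightarrow> a \<otimes> c' \<oplus> b' \<otimes> c \<prec> a' \<otimes> c \<oplus> b \<otimes> c'"
  unfolding qltM_def using assms by (auto simp: pr_eq_iff)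

lemma qlt_N: "qltM M x y \<Longrightarrow> x \<in> NN \<and> y \<in> NN"
  unfolding qltM_def by auto

lemma q_irrefl: "x \<in> QM M \<Longrightarrow> \<not> qltM M x x"
  using QM_code qlt_code lt_irrefl by (metis addN mulN)

lemma q_trans: assumes "x \<in> QM M" "y \<in> QM M" "z \<in> QM M" "qltM M x y" "qltM M y z" shows "qltM M x z"
proof -
  obtain a b c where 1: "a \<in> NN" "b \<in> NN" "c \<in> NN" "x = pr (pr a b) c" "ze \<prec> c" using QM_code assms by blast
  obtain a' b' c' where 2: "a' \<in> NN" "b' \<in> NN" "c' \<in> NN" "y = pr (pr a' b') c'" "ze \<prec> c'" using QM_code assms by blast
  obtain a'' b'' c'' where 3: "a'' \<in> NN" "b'' \<in> NN" "c'' \<in> NN" "z = pr (pr a'' b'') c''" "ze \<prec> c''" using QM_code assms by blast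
  show ?thesis using assms(4,5) 1 2 3 core_trans[of a b c a' b' c' a'' b'' c''] by (simp add: qlt_code)
qed

lemma q_neg: assumes "x \<in> QM M" "y \<in> QM M" "z \<in> QM M" "qltM M x z" shows "qltM M x y \<or> qltM M y z"
proof -
  obtain a b c where 1: "a \<in> NN" "b \<in> NN" "c \<in> NN" "x = pr (pr a b) c" "ze \<prec> c" using QM_code assms by blast
  obtain a' b' c' where 2: "a' \<in> NN" "b' \<in> NN" "c' \<in> NN" "y = pr (pr a' b') c'" "ze \<prec> c'" using QM_code assms by blast
  obtain a'' b'' c'' where 3: "a'' \<in> NN" "b'' \<in> NN" "c'' \<in> NN" "z = pr (pr a'' b'') c''" "ze \<prec> c''" using QM_code assms by blast
  show ?thesis using assms(4) 1 2 3 core_neg[of a b c a' b' c' a'' b'' c''] by (auto simp: qlt_code)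
qed

definition Lq where "Lq = {n \<in> NN. \<exists>y\<in>NN. \<exists>z\<in>NN. n = pr y z \<and> qltM M y z}"

lemma Lq_S: "Lq \<in> SS"
proof -
  have "{n \<in> NN. \<exists>y\<in>NN. \<exists>z\<in>NN. n = pr y z \<and> qltM M y z} \<in> SS"
  proof (rule comp_fm[where q="BEx 2 (Pl (V 0) Ot) (BEx 3 (Pl (V 0) Ot) (Conj (Eq (V 0) (prT (V 2) (V 3))) qF))"
        and v="\<lambda>_. ze" and w="\<lambda>_. W0" and i=0 and k=1])
    fix n a assume n: "n \<in> NN" "a \<in> NN"
    show "sat M ((\<lambda>_. ze)(0 := n, 1 := a)) (\<lambda>_. W0) (BEx 2 (Pl (V 0) Ot) (BEx 3 (Pl (V 0) Ot) (Conj (Eq (V 0) (prT (V 2) (V 3))) qF))) =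
         (\<exists>y\<in>NN. \<exists>z\<in>NN. n = pr y z \<and> qltM M y z)"
      using n apply (auto simp: qF_sem lt_suc_iff)
      subgoal for y z using le_pr1[of y z] le_pr2[of y z] by blast
      done
  qed (auto simp: W0)
  thus ?thesis unfolding Lq_def .
qed

lemma Lq_iff: "y \<in> NN \<Longrightarrow> z \<in> NN \<Longrightarrow> pr y z \<in> Lq \<longleftrightarrow> qltM M y z"
  unfolding Lq_def by (auto simp: pr_eq_iff)

definition Lq' where "Lq' = {n \<in> NN. \<exists>y\<in>NN. \<exists>z\<in>NN. n = pr y z \<and> pr z y \<in> Lq}"

lemma Lq'_S: "Lq' \<in> SS"
proof -
  have "{n \<in> NN. \<exists>y\<in>NN. \<exists>z\<in>NN. n = pr y z \<and> pr z y \<in> Lq} \<in> SS"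
  proof (rule comp_fm[where q="BEx 2 (Pl (V 0) Ot) (BEx 3 (Pl (V 0) Ot) (Conj (Eq (V 0) (prT (V 2) (V 3))) (In (prT (V 3) (V 2)) 0)))"
        and v="\<lambda>_. ze" and w="\<lambda>_. Lq" and i=0 and k=1])
    fix n a assume n: "n \<in> NN" "a \<in> NN"
    show "sat M ((\<lambda>_. ze)(0 := n, 1 := a)) (\<lambda>_. Lq) (BEx 2 (Pl (V 0) Ot) (BEx 3 (Pl (V 0) Ot) (Conj (Eq (V 0) (prT (V 2) (V 3))) (In (prT (V 3) (V 2)) 0)))) =
         (\<exists>y\<in>NN. \<exists>z\<in>NN. n = pr y z \<and> pr z y \<in> Lq)"
      using n apply (auto simp: lt_suc_iff)
      subgoal for y z using le_pr1[of y z] le_pr2[of y z] by blast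
      done
  qed (auto simp: Lq_S)
  thus ?thesis unfolding Lq'_def .
qed

lemma Lq'_iff: "y \<in> NN \<Longrightarrow> z \<in> NN \<Longrightarrow> pr y z \<in> Lq' \<longleftrightarrow> qltM M z y"
  unfolding Lq'_def by (auto simp: pr_eq_iff Lq_iff)

end

context rca begin

lemma induct_sig:
  assumes "bounded q" "\<forall>j. v j \<in> NN" "\<forall>j. w j \<in> SS"
    and sem: "\<And>n. n \<in> NN \<Longrightarrow> (\<exists>a\<in>NN. sat M (v(i:=n, k:=a)) w q) = P n"
    and "P ze" and "\<And>n. n \<in> NN \<Longrightarrow> P n \<Longrightarrow> P (n \<oplus> on)" and "n \<in> NN"
  shows "P n"
proof -
  have s: "sat M (v(i:=n)) w (Ex k q) = P n" if "n \<in> NN" for n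
    using sem[OF that] by simp
  have "\<forall>n\<in>NN. sat M (v(i := n)) w (Ex k q)"
    apply (rule ind_ax)
    using assms s by (auto simp: sigma01_def)
  thus ?thesis using s assms by auto
qed

lemma maxl:
  assumes L: "L \<in> SS" and Y: "Y \<in> SS" "y0 \<in> Y" and b: "b \<in> NN" "\<forall>y\<in>Y. y \<prec> b"
    and irr: "\<forall>y\<in>Y. pr y y \<notin> L"
    and tr: "\<forall>x\<in>Y. \<forall>y\<in>Y. \<forall>z\<in>Y. pr x y \<in> L \<longrightarrow> pr y z \<in> L \<longrightarrow> pr x z \<in> L"
  shows "\<exists>m\<in>Y. \<forall>z\<in>Y. pr m z \<notin> L"
proof -
  have YN: "Y \<subseteq> NN" using SN Y by blast
  have step: "\<exists>y\<in>NN. y \<in> Y \<and> (\<forall>z\<in>NN. z \<prec> n \<oplus> on \<longrightarrow> z \<notin> Y \<or> pr y z \<notin> L)"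
    if n: "n \<in> NN" and ih: "\<exists>y\<in>NN. y \<in> Y \<and> (\<forall>z\<in>NN. z \<prec> n \<longrightarrow> z \<notin> Y \<or> pr y z \<notin> L)" for n
  proof -
    obtain y where y: "y \<in> NN" "y \<in> Y" "\<forall>z\<in>NN. z \<prec> n \<longrightarrow> z \<notin> Y \<or> pr y z \<notin> L" using ih by blast
    show ?thesis
    proof (cases "n \<in> Y \<and> pr y n \<in> L")
      case True
      have "\<forall>z\<in>NN. z \<prec> n \<oplus> on \<longrightarrow> z \<notin> Y \<or> pr n z \<notin> L"
      proof (intro ballI impI)
        fix z assume z: "z \<in> NN" "z \<prec> n \<oplus> on"
        hence "z \<prec> n \<or> z = n" using ax8 n by blast
        thus "z \<notin> Y \<or> pr n z \<notin> L" using y True irr tr z by blast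
      qed
      thus ?thesis using True n by blast
    next
      case False
      have "\<forall>z\<in>NN. z \<prec> n \<oplus> on \<longrightarrow> z \<notin> Y \<or> pr y z \<notin> L"
      proof (intro ballI impI)
        fix z assume z: "z \<in> NN" "z \<prec> n \<oplus> on"
        hence "z \<prec> n \<or> z = n" using ax8 n by blast
        thus "z \<notin> Y \<or> pr y z \<notin> L" using y False z by blast
      qed
      thus ?thesis using y by blast
    qed
  qed
  have "\<exists>y\<in>NN. y \<in> Y \<and> (\<forall>z\<in>NN. z \<prec> b \<longrightarrow> z \<notin> Y \<or> pr y z \<notin> L)"
    apply (rule induct_sig[where q="Conj (In (V 1) 0) (BAll 2 (V 0) (Disj (Neg (In (V 2) 0)) (Neg (In (prT (V 1) (V 2)) 1))))"
          and v="\<lambda>_. ze" and w="(\<lambda>_. Y)(1:=L)" and i=0 and k=1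
          and P="\<lambda>n. \<exists>y\<in>NN. y \<in> Y \<and> (\<forall>z\<in>NN. z \<prec> n \<longrightarrow> z \<notin> Y \<or> pr y z \<notin> L)"])
    subgoal by simp
    subgoal by simp
    subgoal using L Y by simp
    subgoal by simp
    subgoal using Y YN ax7 by blast
    subgoal for n using step[of n] by blast
    subgoal using b by simp
    done
  thus ?thesis using b YN by blast
qed

lemma unbounded:
  assumes L: "L \<in> SS" and Y: "Y \<in> SS" "y0 \<in> Y"
    and irr: "\<forall>y\<in>Y. pr y y \<notin> L"
    and tr: "\<forall>x\<in>Y. \<forall>y\<in>Y. \<forall>z\<in>Y. pr x y \<in> L \<longrightarrow> pr y z \<in> L \<longrightarrow> pr x z \<in> L"
    and nomax: "\<forall>y\<in>Y. \<exists>z\<in>Y. pr y z \<in> L"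
    and n: "n \<in> NN"
  shows "\<exists>y\<in>Y. n \<prec> y"
proof (rule ccontr)
  assume nt: "\<not> (\<exists>y\<in>Y. n \<prec> y)"
  have YN: "Y \<subseteq> NN" using SN Y by blast
  have "\<forall>y\<in>Y. y \<prec> n \<oplus> on"
  proof
    fix y assume "y \<in> Y"
    hence "y \<in> NN" "\<not> n \<prec> y" using YN nt by auto
    thus "y \<prec> n \<oplus> on" using n not_lt lt_suc_iff by simp
  qed
  moreover have "n \<oplus> on \<in> NN" using n by simp
  ultimately obtain m where "m \<in> Y" "\<forall>z\<in>Y. pr m z \<notin> L" using maxl[OF L Y _ _ irr tr] by blast
  thus False using nomax by blast
qed

lemma least:
  assumes Y: "Y \<in> SS" "y0 \<in> Y"
  shows "\<exists>y\<in>Y. \<forall>z\<in>Y. \<not> z \<prec> y"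
proof (rule ccontr)
  assume nl: "\<not> ?thesis"
  have YN: "Y \<subseteq> NN" using SN Y by blast
  have all: "\<forall>k\<in>NN. k \<prec> n \<longrightarrow> k \<notin> Y" if "n \<in> NN" for n
    apply (rule induct_fm[where q="BAll 2 (V 0) (Neg (In (V 2) 0))"
          and v="\<lambda>_. ze" and w="\<lambda>_. Y" and i=0 and k=1
          and P="\<lambda>n. \<forall>k\<in>NN. k \<prec> n \<longrightarrow> k \<notin> Y"])
    subgoal by simp
    subgoal by simp
    subgoal using Y by simp
    subgoal by simp
    subgoal by simp
    subgoal using ax7 by blast
    subgoal for n
    proof
      fix k assume n: "n \<in> NN" and ih: "\<forall>k\<in>NN. k \<prec> n \<longrightarrow> k \<notin> Y" and k: "k \<in> NN"
      show "k \<prec> n \<oplus> on \<longrightarrow> k \<notin> Y"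
      proof
        assume "k \<prec> n \<oplus> on"
        hence "k \<prec> n \<or> k = n" using ax8 n k by blast
        moreover have "n \<notin> Y"
        proof
          assume "n \<in> Y"
          then obtain z where "z \<in> Y" "z \<prec> n" using nl by blast
          thus False using ih YN by blast
        qed
        ultimately show "k \<notin> Y" using ih k by blast
      qed
    qed
    subgoal using that by simp
    done
  have y0: "y0 \<in> NN" using Y YN by blast
  have "y0 \<prec> y0 \<oplus> on \<longrightarrow> y0 \<notin> Y" using all[of "y0 \<oplus> on"] y0 by simp
  thus False using Y y0 lt_suc[of y0] by blast
qed

lemma records:
  assumes L: "L \<in> SS" and X: "X \<in> SS" "x0 \<in> X"
    and irr: "\<forall>y\<in>X. pr y y \<notin> L"
    and tr: "\<forall>x\<in>X. \<forall>y\<in>X. \<forall>z\<in>X. pr x y \<in> L \<longrightarrow> pr y z \<in> L \<longrightarrow> pr x z \<in> L"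
    and ng: "\<forall>x\<in>X. \<forall>y\<in>X. \<forall>z\<in>X. pr x z \<in> L \<longrightarrow> pr x y \<in> L \<or> pr y z \<in> L"
    and nomax: "\<forall>y\<in>X. \<exists>z\<in>X. pr y z \<in> L"
  shows "\<exists>T\<in>SS. T \<subseteq> X \<and> (\<forall>n\<in>NN. \<exists>y\<in>T. n \<prec> y) \<and> (\<forall>y\<in>T. \<forall>y'\<in>T. pr y y' \<in> L \<longrightarrow> y \<prec> y')"
proof -
  have XN: "X \<subseteq> NN" using SN X by blast
  define T where "T = {y \<in> NN. y \<in> X \<and> (\<forall>z\<in>NN. z \<prec> y \<longrightarrow> z \<notin> X \<or> pr z y \<in> L)}"
  have TS: "T \<in> SS" unfolding T_def
    apply (rule comp_fm[where q="Conj (In (V 0) 0) (BAll 2 (V 0) (Disj (Neg (In (V 2) 0)) (In (prT (V 2) (V 0)) 1)))"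
        and v="\<lambda>_. ze" and w="(\<lambda>_. X)(1:=L)" and i=0 and k=1])
    using L X by auto
  have TX: "T \<subseteq> X" unfolding T_def by blast
  have hom: "\<forall>y\<in>T. \<forall>y'\<in>T. pr y y' \<in> L \<longrightarrow> y \<prec> y'"
  proof (intro ballI impI)
    fix y y' assume y: "y \<in> T" "y' \<in> T" "pr y y' \<in> L"
    have N: "y \<in> NN" "y' \<in> NN" "y \<in> X" "y' \<in> X" using y T_def by auto
    show "y \<prec> y'"
    proof (rule ccontr)
      assume "\<not> y \<prec> y'"
      hence "y' \<prec> y \<or> y' = y" using not_lt N by blast
      thus False
      proof
        assume "y' \<prec> y"
        hence "pr y' y \<in> L" using y(1) N unfolding T_def by blast
        hence "pr y y \<in> L" using tr y N by blast
        thus False using irr N by blast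
      next
        assume "y' = y" thus False using irr N y by blast
      qed
    qed
  qed
  have unb: "\<exists>y\<in>T. n \<prec> y" if n: "n \<in> NN" for n
  proof -
    define Y1 where "Y1 = {z \<in> NN. z \<in> X \<and> z \<prec> n \<oplus> on}"
    have Y1S: "Y1 \<in> SS" unfolding Y1_def
      apply (rule comp_fm[where q="Conj (In (V 0) 0) (Lt (V 0) (Pl (V 2) Ot))"
          and v="(\<lambda>_. ze)(2:=n)" and w="\<lambda>_. X" and i=0 and k=1])
      using X n by auto
    show ?thesis
    proof (cases "Y1 = {}")
      case True
      obtain ys where ys: "ys \<in> X" "\<forall>z\<in>X. \<not> z \<prec> ys" using least[OF X] by blast
      have ysN: "ys \<in> NN" using ys XN by blast
      have "ys \<in> T" unfolding T_def using ys ysN by blast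
      moreover have "n \<prec> ys"
      proof -
        have "\<not> ys \<prec> n \<oplus> on" using True ys ysN unfolding Y1_def by blast
        hence "n \<oplus> on \<preceq> ys" using not_lt ysN n by simp
        thus ?thesis using lt_suc[of n] n ysN lt_le_trans[of n "n \<oplus> on" ys] by simp
      qed
      ultimately show ?thesis by blast
    next
      case False
      then obtain y1 where y1: "y1 \<in> Y1" by blast
      have Y1X: "Y1 \<subseteq> X" unfolding Y1_def by blast
      have "\<forall>y\<in>Y1. y \<prec> n \<oplus> on" unfolding Y1_def by blast
      moreover have "\<forall>y\<in>Y1. pr y y \<notin> L" using irr Y1X by blast
      moreover have "\<forall>x\<in>Y1. \<forall>y\<in>Y1. \<forall>z\<in>Y1. pr x y \<in> L \<longrightarrow> pr y z \<in> L \<longrightarrow> pr x z \<in> L"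
        using tr Y1X by blast
      moreover have "n \<oplus> on \<in> NN" using n by simp
      ultimately obtain m where m: "m \<in> Y1" "\<forall>z\<in>Y1. pr m z \<notin> L"
        using maxl[OF L Y1S y1] by blast
      have mX: "m \<in> X" "m \<in> NN" using m Y1X XN by auto
      define Y2 where "Y2 = {y \<in> NN. y \<in> X \<and> pr m y \<in> L}"
      have Y2S: "Y2 \<in> SS" unfolding Y2_def
        apply (rule comp_fm[where q="Conj (In (V 0) 0) (In (prT (V 2) (V 0)) 1)"
            and v="(\<lambda>_. ze)(2:=m)" and w="(\<lambda>_. X)(1:=L)" and i=0 and k=1])
        using X L mX by auto
      obtain y2 where "y2 \<in> X" "pr m y2 \<in> L" using nomax mX by blast
      hence "y2 \<in> Y2" unfolding Y2_def using XN by blast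
      then obtain ys where ys: "ys \<in> Y2" "\<forall>z\<in>Y2. \<not> z \<prec> ys" using least[OF Y2S] by blast
      have ysX: "ys \<in> X" "ys \<in> NN" "pr m ys \<in> L" using ys unfolding Y2_def by auto
      have "ys \<in> T"
      proof -
        have "\<forall>z\<in>NN. z \<prec> ys \<longrightarrow> z \<notin> X \<or> pr z ys \<in> L"
        proof (intro ballI impI)
          fix z assume z: "z \<in> NN" "z \<prec> ys"
          show "z \<notin> X \<or> pr z ys \<in> L"
          proof (cases "z \<in> X")
            case True
            hence "pr m z \<notin> L" using ys z unfolding Y2_def by blast
            thus ?thesis using ng mX ysX True by blast
          qed simp
        qed
        thus ?thesis unfolding T_def using ysX by blast
      qed
      moreover have "n \<prec> ys"
      proof (rule ccontr)
        assume "\<not> n \<prec> ys"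
        hence "ys \<prec> n \<oplus> on" using not_lt lt_suc_iff n ysX by simp
        hence "ys \<in> Y1" unfolding Y1_def using ysX by blast
        thus False using m ysX by blast
      qed
      ultimately show ?thesis by blast
    qed
  qed
  show ?thesis using TS TX hom unb by blast
qed

end

context rca begin

lemma subS: assumes "L \<in> SS" "X \<in> SS" "m \<in> NN" shows "{y \<in> NN. y \<in> X \<and> pr m y \<in> L} \<in> SS"
  apply (rule comp_fm[where q="Conj (In (V 0) 0) (In (prT (V 2) (V 0)) 1)"
      and v="(\<lambda>_. ze)(2:=m)" and w="(\<lambda>_. X)(1:=L)" and i=0 and k=1])
  using assms by auto

definition Gs where "Gs F = {p \<in> NN. \<exists>x\<in>NN. \<exists>y\<in>NN. \<exists>c\<in>NN. p = pr (pr x y) c \<and>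
   ((x \<prec> y \<and> p \<in> F) \<or> (\<not> x \<prec> y \<and> (\<exists>c0\<in>NN. c = c0 \<oplus> on \<oplus> on \<and> pr (pr x y) c0 \<in> F)))}"

lemma Gs_S: assumes "F \<in> SS" shows "Gs F \<in> SS"
  unfolding Gs_def
proof (rule comp_fm[where q="BEx 2 (Pl (V 0) Ot) (BEx 3 (Pl (V 0) Ot) (BEx 4 (Pl (V 0) Ot) (Conj (Eq (V 0) (prT (prT (V 2) (V 3)) (V 4)))
   (Disj (Conj (Lt (V 2) (V 3)) (In (V 0) 0)) (Conj (Neg (Lt (V 2) (V 3))) (BEx 5 (V 4) (Conj (Eq (V 4) (Pl (Pl (V 5) Ot) Ot)) (In (prT (prT (V 2) (V 3)) (V 5)) 0))))))))"
      and v="\<lambda>_. ze" and w="\<lambda>_. F" and i=0 and k=1])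
  fix n a assume n: "n \<in> NN" "a \<in> NN"
  have c0: "c0 \<prec> c0 \<oplus> on \<oplus> on" if "c0 \<in> NN" for c0
    using lt_suc[of c0] lt_suc[of "c0 \<oplus> on"] lt_trans[of c0 "c0 \<oplus> on" "c0 \<oplus> on \<oplus> on"] that by simp
  show "sat M ((\<lambda>_. ze)(0 := n, 1 := a)) (\<lambda>_. F) (BEx 2 (Pl (V 0) Ot) (BEx 3 (Pl (V 0) Ot) (BEx 4 (Pl (V 0) Ot) (Conj (Eq (V 0) (prT (prT (V 2) (V 3)) (V 4)))
   (Disj (Conj (Lt (V 2) (V 3)) (In (V 0) 0)) (Conj (Neg (Lt (V 2) (V 3))) (BEx 5 (V 4) (Conj (Eq (V 4) (Pl (Pl (V 5) Ot) Ot)) (In (prT (prT (V 2) (V 3)) (V 5)) 0)))))))))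
    = (\<exists>x\<in>NN. \<exists>y\<in>NN. \<exists>c\<in>NN. n = pr (pr x y) c \<and>
   ((x \<prec> y \<and> n \<in> F) \<or> (\<not> x \<prec> y \<and> (\<exists>c0\<in>NN. c = c0 \<oplus> on \<oplus> on \<and> pr (pr x y) c0 \<in> F))))"
    using n apply (simp add: lt_suc_iff)
    apply (rule iffI)
     apply blast
    apply (elim bexE)
    subgoal for x y c
      using le_code[of x y c] c0 by blast
    done
qed (auto simp: assms)

lemma Gs_mem: assumes "x \<in> NN" "y \<in> NN" "g \<in> NN"
  shows "pr (pr x y) g \<in> Gs F \<longleftrightarrow> (x \<prec> y \<and> pr (pr x y) g \<in> F) \<or> (\<not> x \<prec> y \<and> (\<exists>c0\<in>NN. g = c0 \<oplus> on \<oplus> on \<and> pr (pr x y) c0 \<in> F))"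
  unfolding Gs_def using assms by (auto simp: pr_eq_iff)


lemma Lq_props: assumes "X \<subseteq> QM M"
  shows "\<forall>y\<in>X. pr y y \<notin> Lq"
    and "\<forall>x\<in>X. \<forall>y\<in>X. \<forall>z\<in>X. pr x y \<in> Lq \<longrightarrow> pr y z \<in> Lq \<longrightarrow> pr x z \<in> Lq"
    and "\<forall>x\<in>X. \<forall>y\<in>X. \<forall>z\<in>X. pr x z \<in> Lq \<longrightarrow> pr x y \<in> Lq \<or> pr y z \<in> Lq"
    and "\<forall>y\<in>X. pr y y \<notin> Lq'"
    and "\<forall>x\<in>X. \<forall>y\<in>X. \<forall>z\<in>X. pr x y \<in> Lq' \<longrightarrow> pr y z \<in> Lq' \<longrightarrow> pr x z \<in> Lq'"
    and "\<forall>x\<in>X. \<forall>y\<in>X. \<forall>z\<in>X. pr x z \<in> Lq' \<longrightarrow> pr x y \<in> Lq' \<or> pr y z \<in> Lq'"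
proof -
  have N: "\<And>x. x \<in> X \<Longrightarrow> x \<in> NN" "\<And>x. x \<in> X \<Longrightarrow> x \<in> QM M" using assms QM_N by auto
  show "\<forall>y\<in>X. pr y y \<notin> Lq"
    apply (simp add: Lq_iff N(1)) using q_irrefl N(2) by blast
  show "\<forall>x\<in>X. \<forall>y\<in>X. \<forall>z\<in>X. pr x y \<in> Lq \<longrightarrow> pr y z \<in> Lq \<longrightarrow> pr x z \<in> Lq"
    apply (simp add: Lq_iff N(1)) using q_trans N(2) by blast
  show "\<forall>x\<in>X. \<forall>y\<in>X. \<forall>z\<in>X. pr x z \<in> Lq \<longrightarrow> pr x y \<in> Lq \<or> pr y z \<in> Lq"
    apply (simp add: Lq_iff N(1)) using q_neg N(2) by blast
  show "\<forall>y\<in>X. pr y y \<notin> Lq'"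
    apply (simp add: Lq'_iff N(1)) using q_irrefl N(2) by blast
  show "\<forall>x\<in>X. \<forall>y\<in>X. \<forall>z\<in>X. pr x y \<in> Lq' \<longrightarrow> pr y z \<in> Lq' \<longrightarrow> pr x z \<in> Lq'"
    apply (simp add: Lq'_iff N(1)) using q_trans N(2) by blast
  show "\<forall>x\<in>X. \<forall>y\<in>X. \<forall>z\<in>X. pr x z \<in> Lq' \<longrightarrow> pr x y \<in> Lq' \<or> pr y z \<in> Lq'"
    apply (simp add: Lq'_iff N(1)) using q_neg N(2) by blast
qed

lemma main:
  assumes col: "colouring M 2 F" and DT: "DT2_4_2 M"
  shows "\<exists>X\<in>SS. X \<subseteq> QM M \<and>
        ((infiniteM M X \<and> homog_col M F X (numM M 0)) \<or>
         (dloM M X \<and> homog_col M F X (numM M 1)))"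
proof -
  have FS: "F \<in> SS"
    and Fform: "\<forall>p\<in>F. \<exists>x\<in>QM M. \<exists>y\<in>QM M. \<exists>c\<in>NN. qltM M x y \<and> c \<prec> numM M 2 \<and> p = pr (pr x y) c"
    and Ftot: "\<forall>x\<in>QM M. \<forall>y\<in>QM M. qltM M x y \<longrightarrow> (\<exists>c\<in>NN. c \<prec> numM M 2 \<and> pr (pr x y) c \<in> F)"
    and Funiq: "\<forall>x\<in>QM M. \<forall>y\<in>QM M. \<forall>c\<in>NN. \<forall>c'\<in>NN. pr (pr x y) c \<in> F \<longrightarrow> pr (pr x y) c' \<in> F \<longrightarrow> c = c'"
    using col unfolding colouring_def by blast+
  have Fcol: "x \<in> QM M \<and> y \<in> QM M \<and> qltM M x y \<and> (c = numM M 0 \<or> c = numM M 1)"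
    if A: "x \<in> NN" "y \<in> NN" "c \<in> NN" "pr (pr x y) c \<in> F" for x y c
  proof -
    obtain x' y' c' where "x' \<in> QM M" "y' \<in> QM M" "c' \<in> NN" "qltM M x' y'" "c' \<prec> numM M 2"
      "pr (pr x y) c = pr (pr x' y') c'"
      using Fform A(4) by blast
    note h = this
    have "pr x y \<in> NN" "pr x' y' \<in> NN" using A h QM_N by auto
    hence "pr x y = pr x' y' \<and> c = c'" using pr_inj[of "pr x y" c "pr x' y'" c'] h(3,6) A(3) by blast
    hence "x = x' \<and> y = y' \<and> c = c'" using pr_inj[of x y x' y'] h(1,2) A(1,2) QM_N by blast
    hence e: "x = x'" "y = y'" "c = c'" by auto
    have "c' = numM M 0 \<or> c' = numM M 1" using lt_num2[of c'] h(3,5) by simp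
    thus ?thesis using h(1,2,4) e by simp
  qed
  define G where "G = Gs F"
  have GS: "G \<in> SS" using Gs_S FS G_def by simp
  have Gmem: "pr (pr x y) g \<in> G \<longleftrightarrow> (x \<prec> y \<and> pr (pr x y) g \<in> F) \<or> (\<not> x \<prec> y \<and> (\<exists>c0\<in>NN. g = c0 \<oplus> on \<oplus> on \<and> pr (pr x y) c0 \<in> F))"
    if "x \<in> NN" "y \<in> NN" "g \<in> NN" for x y g
    using Gs_mem that G_def by simp
  have GN: "G \<subseteq> NN" using GS SN by blast
  have n2: "numM M 0 \<oplus> on \<oplus> on = numM M 2" "numM M 1 \<oplus> on \<oplus> on = numM M 3"
    by (simp_all add: numeral_eq_Suc)
  have col4: "colouring M 4 G"
    unfolding colouring_def
  proof (intro conjI)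
    show "G \<in> SS" by (rule GS)
    show "\<forall>p\<in>G. \<exists>x\<in>QM M. \<exists>y\<in>QM M. \<exists>c\<in>NN. qltM M x y \<and> c \<prec> numM M 4 \<and> p = pr (pr x y) c"
    proof
      fix p assume p: "p \<in> G"
      then obtain x y c where xyc: "x \<in> NN" "y \<in> NN" "c \<in> NN" "p = pr (pr x y) c"
        "(x \<prec> y \<and> p \<in> F) \<or> (\<not> x \<prec> y \<and> (\<exists>c0\<in>NN. c = c0 \<oplus> on \<oplus> on \<and> pr (pr x y) c0 \<in> F))"
        unfolding G_def Gs_def by blast
      from xyc(5) show "\<exists>x\<in>QM M. \<exists>y\<in>QM M. \<exists>c\<in>NN. qltM M x y \<and> c \<prec> numM M 4 \<and> p = pr (pr x y) c"
      proof
        assume "x \<prec> y \<and> p \<in> F"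
        hence "x \<in> QM M \<and> y \<in> QM M \<and> qltM M x y \<and> (c = numM M 0 \<or> c = numM M 1)"
          using Fcol xyc by blast
        thus ?thesis using xyc lt_num4 by auto
      next
        assume "\<not> x \<prec> y \<and> (\<exists>c0\<in>NN. c = c0 \<oplus> on \<oplus> on \<and> pr (pr x y) c0 \<in> F)"
        then obtain c0 where c0: "c0 \<in> NN" "c = c0 \<oplus> on \<oplus> on" "pr (pr x y) c0 \<in> F" by blast
        hence "x \<in> QM M \<and> y \<in> QM M \<and> qltM M x y \<and> (c0 = numM M 0 \<or> c0 = numM M 1)"
          using Fcol xyc by blast
        note h = this
        have "c = numM M 2 \<or> c = numM M 3" using c0(2) h n2 by auto
        hence "c \<prec> numM M 4" using lt_num4 xyc(3) by blast
        thus ?thesis using h xyc by blast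
      qed
    qed
    show "\<forall>x\<in>QM M. \<forall>y\<in>QM M. qltM M x y \<longrightarrow> (\<exists>c\<in>NN. c \<prec> numM M 4 \<and> pr (pr x y) c \<in> G)"
    proof (intro ballI impI)
      fix x y assume xy: "x \<in> QM M" "y \<in> QM M" "qltM M x y"
      then obtain c where c: "c \<in> NN" "c \<prec> numM M 2" "pr (pr x y) c \<in> F" using Ftot by blast
      have xyN: "x \<in> NN" "y \<in> NN" using xy QM_N by auto
      have cc: "c = numM M 0 \<or> c = numM M 1" using c lt_num2 by simp
      show "\<exists>c\<in>NN. c \<prec> numM M 4 \<and> pr (pr x y) c \<in> G"
      proof (cases "x \<prec> y")
        case True
        hence "pr (pr x y) c \<in> G" using Gmem xyN c by simp
        thus ?thesis using c cc lt_num4 by auto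
      next
        case False
        hence "pr (pr x y) (c \<oplus> on \<oplus> on) \<in> G" using Gmem xyN c by auto
        moreover have "c \<oplus> on \<oplus> on \<prec> numM M 4" using cc n2 lt_num4 by auto
        ultimately show ?thesis using c by auto
      qed
    qed
    show "\<forall>x\<in>QM M. \<forall>y\<in>QM M. \<forall>c\<in>NN. \<forall>c'\<in>NN.
        pr (pr x y) c \<in> G \<longrightarrow> pr (pr x y) c' \<in> G \<longrightarrow> c = c'"
    proof (intro ballI impI)
      fix x y c c' assume xy: "x \<in> QM M" "y \<in> QM M" and c: "c \<in> NN" "c' \<in> NN"
        and g: "pr (pr x y) c \<in> G" "pr (pr x y) c' \<in> G"
      have xyN: "x \<in> NN" "y \<in> NN" using xy QM_N by auto
      show "c = c'"
      proof (cases "x \<prec> y")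
        case True
        thus ?thesis using g Gmem xyN c Funiq xy by auto
      next
        case False
        then obtain c0 c0' where "c0 \<in> NN" "c0' \<in> NN" "c = c0 \<oplus> on \<oplus> on" "c' = c0' \<oplus> on \<oplus> on"
          "pr (pr x y) c0 \<in> F" "pr (pr x y) c0' \<in> F"
          using g Gmem xyN c by auto
        thus ?thesis using Funiq xy by auto
      qed
    qed
  qed
  have Guniq: "\<forall>x\<in>QM M. \<forall>y\<in>QM M. \<forall>c\<in>NN. \<forall>c'\<in>NN.
        pr (pr x y) c \<in> G \<longrightarrow> pr (pr x y) c' \<in> G \<longrightarrow> c = c'"
    using col4 unfolding colouring_def by blast
  from col4 obtain X c1 c2 where X: "X \<in> SS" "X \<subseteq> QM M" "dloM M X" "c1 \<in> NN" "c2 \<in> NN"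
    and Xc: "\<forall>x\<in>X. \<forall>y\<in>X. qltM M x y \<longrightarrow> pr (pr x y) c1 \<in> G \<or> pr (pr x y) c2 \<in> G"
    using DT unfolding DT2_4_2_def by blast
  have XN: "X \<subseteq> NN" using X SN by blast
  have XQ: "\<And>x. x \<in> X \<Longrightarrow> x \<in> QM M" using X by blast
  obtain x0 where x0: "x0 \<in> X" using X unfolding dloM_def by blast
  have nomin: "\<forall>x\<in>X. \<exists>y\<in>X. qltM M y x" and nomax: "\<forall>x\<in>X. \<exists>y\<in>X. qltM M x y"
    using X unfolding dloM_def by blast+
  note LP = Lq_props[OF X(2)]
  have fcol: "\<exists>f\<in>NN. (f = numM M 0 \<or> f = numM M 1) \<and> pr (pr x y) f \<in> F"
    if "x \<in> X" "y \<in> X" "qltM M x y" for x y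
    using Ftot that XQ lt_num2 by blast
  have gcol: "pr (pr x y) g \<in> G \<Longrightarrow> g \<in> NN \<Longrightarrow> g = c1 \<or> g = c2"
    if "x \<in> X" "y \<in> X" "qltM M x y" for x y g
  proof -
    assume g: "pr (pr x y) g \<in> G" "g \<in> NN"
    have "pr (pr x y) c1 \<in> G \<or> pr (pr x y) c2 \<in> G" using Xc that by blast
    moreover have "\<forall>c\<in>NN. \<forall>c'\<in>NN. pr (pr x y) c \<in> G \<longrightarrow> pr (pr x y) c' \<in> G \<longrightarrow> c = c'"
      using Guniq XQ that by blast
    ultimately show ?thesis using g X by blast
  qed
  obtain ya where ya: "ya \<in> X" "qltM M x0 ya" "x0 \<prec> ya"
  proof -
    define Y where "Y = {y \<in> NN. y \<in> X \<and> pr x0 y \<in> Lq}"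
    have YS: "Y \<in> SS" unfolding Y_def using subS Lq_S X x0 XN by blast
    have YX: "Y \<subseteq> X" unfolding Y_def by blast
    have Yi: "y \<in> Y \<longleftrightarrow> y \<in> X \<and> qltM M x0 y" for y
      unfolding Y_def using XN x0 Lq_iff by blast
    obtain y1 where "y1 \<in> X" "qltM M x0 y1" using nomax x0 by blast
    hence y1: "y1 \<in> Y" using Yi by blast
    have "\<forall>y\<in>Y. \<exists>z\<in>Y. pr y z \<in> Lq"
    proof
      fix y assume y: "y \<in> Y"
      then obtain z where "z \<in> X" "qltM M y z" using nomax YX by blast
      moreover hence "qltM M x0 z" using q_trans XQ x0 y Yi by blast
      ultimately show "\<exists>z\<in>Y. pr y z \<in> Lq" using Yi Lq_iff XN y YX by blast
    qed
    moreover have "\<forall>y\<in>Y. pr y y \<notin> Lq" using LP(1) YX by blast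
    moreover have "\<forall>x\<in>Y. \<forall>y\<in>Y. \<forall>z\<in>Y. pr x y \<in> Lq \<longrightarrow> pr y z \<in> Lq \<longrightarrow> pr x z \<in> Lq" using LP(2) YX by blast
    ultimately obtain y where "y \<in> Y" "x0 \<prec> y" using unbounded[OF Lq_S YS y1] x0 XN by blast
    thus ?thesis using that Yi by blast
  qed
  obtain yd where yd: "yd \<in> X" "qltM M yd x0" "x0 \<prec> yd"
  proof -
    define Y where "Y = {y \<in> NN. y \<in> X \<and> pr x0 y \<in> Lq'}"
    have YS: "Y \<in> SS" unfolding Y_def using subS Lq'_S X x0 XN by blast
    have YX: "Y \<subseteq> X" unfolding Y_def by blast
    have Yi: "y \<in> Y \<longleftrightarrow> y \<in> X \<and> qltM M y x0" for y
      unfolding Y_def using XN x0 Lq'_iff by blast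
    obtain y1 where "y1 \<in> X" "qltM M y1 x0" using nomin x0 by blast
    hence y1: "y1 \<in> Y" using Yi by blast
    have "\<forall>y\<in>Y. \<exists>z\<in>Y. pr y z \<in> Lq'"
    proof
      fix y assume y: "y \<in> Y"
      then obtain z where "z \<in> X" "qltM M z y" using nomin YX by blast
      moreover hence "qltM M z x0" using q_trans XQ x0 y Yi by blast
      ultimately show "\<exists>z\<in>Y. pr y z \<in> Lq'" using Yi Lq'_iff XN y YX by blast
    qed
    moreover have "\<forall>y\<in>Y. pr y y \<notin> Lq'" using LP(4) YX by blast
    moreover have "\<forall>x\<in>Y. \<forall>y\<in>Y. \<forall>z\<in>Y. pr x y \<in> Lq' \<longrightarrow> pr y z \<in> Lq' \<longrightarrow> pr x z \<in> Lq'" using LP(5) YX by blast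
    ultimately obtain y where "y \<in> Y" "x0 \<prec> y" using unbounded[OF Lq'_S YS y1] x0 XN by blast
    thus ?thesis using that Yi by blast
  qed
  have x0N: "x0 \<in> NN" "ya \<in> NN" "yd \<in> NN" using x0 ya yd XN by auto
  obtain fa where fa: "fa \<in> NN" "fa = numM M 0 \<or> fa = numM M 1" "pr (pr x0 ya) fa \<in> F"
    using fcol x0 ya by blast
  obtain fd where fd: "fd \<in> NN" "fd = numM M 0 \<or> fd = numM M 1" "pr (pr yd x0) fd \<in> F"
    using fcol x0 yd by blast
  have ga: "pr (pr x0 ya) fa \<in> G" using Gmem x0N fa ya by simp
  have nyd: "\<not> yd \<prec> x0" using yd x0N lt_asym by blast
  have gd: "pr (pr yd x0) (fd \<oplus> on \<oplus> on) \<in> G" using Gmem x0N fd nyd by auto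
  have fa12: "fa = c1 \<or> fa = c2" using gcol[OF x0 ya(1) ya(2) ga] fa by simp
  have fd12: "fd \<oplus> on \<oplus> on = c1 \<or> fd \<oplus> on \<oplus> on = c2" using gcol[OF yd(1) x0 yd(2) gd] fd by simp
  have num_ne: "numM M j \<noteq> numM M k" if "j \<noteq> k" for j k using num_inj that by simp
  have ne: "numM M 0 \<noteq> numM M 2" "numM M 0 \<noteq> numM M 3" "numM M 1 \<noteq> numM M 2" "numM M 1 \<noteq> numM M 3"
    using num_inj[of 0 2] num_inj[of 0 3] num_inj[of 1 2] num_inj[of 1 3] by auto
  have two: "g \<oplus> on \<oplus> on = numM M 2 \<or> g \<oplus> on \<oplus> on = numM M 3" if "g = numM M 0 \<or> g = numM M 1" for g
    using that n2 by blast
  have fane: "fa \<noteq> fd \<oplus> on \<oplus> on" using fa(2) two[OF fd(2)] ne by metis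
  have agree: "pr (pr x y) fa \<in> F" if A: "x \<in> X" "y \<in> X" "qltM M x y" "x \<prec> y" for x y
  proof -
    obtain f where f: "f \<in> NN" "f = numM M 0 \<or> f = numM M 1" "pr (pr x y) f \<in> F" using fcol A by blast
    have "pr (pr x y) f \<in> G" using Gmem f A XN by auto
    hence "f = c1 \<or> f = c2" using gcol A f by blast
    moreover have "f \<noteq> fd \<oplus> on \<oplus> on" using f(2) two[OF fd(2)] ne by metis
    ultimately have "f = fa" using fa12 fd12 fane by metis
    thus ?thesis using f by simp
  qed
  have disagree: "pr (pr x y) fd \<in> F" if A: "x \<in> X" "y \<in> X" "qltM M x y" "\<not> x \<prec> y" for x y
  proof -
    obtain f where f: "f \<in> NN" "f = numM M 0 \<or> f = numM M 1" "pr (pr x y) f \<in> F" using fcol A by blast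
    have xyN: "x \<in> NN" "y \<in> NN" using A XN by auto
    have "\<exists>c0\<in>NN. f \<oplus> on \<oplus> on = c0 \<oplus> on \<oplus> on \<and> pr (pr x y) c0 \<in> F" using f by blast
    hence "pr (pr x y) (f \<oplus> on \<oplus> on) \<in> G" using Gmem[of x y "f \<oplus> on \<oplus> on"] xyN f(1) A(4) by simp
    hence "f \<oplus> on \<oplus> on = c1 \<or> f \<oplus> on \<oplus> on = c2" using gcol A f by simp
    moreover have "f \<oplus> on \<oplus> on \<noteq> fa" using fa(2) two[OF f(2)] ne by metis
    ultimately have "f \<oplus> on \<oplus> on = fd \<oplus> on \<oplus> on" using fa12 fd12 fane by metis
    hence "f = fd" using add_cancel f fd by simp
    thus ?thesis using f by simp
  qed
  have qN: "x \<in> NN" if "x \<in> X" for x using that XN by blast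
  consider "fa = numM M 1" "fd = numM M 1" | "fa = numM M 0" "fd = numM M 0"
    | "fa = numM M 0" "fd = numM M 1" | "fa = numM M 1" "fd = numM M 0" using fa fd by blast
  thus ?thesis
  proof cases
    case 1
    have "homog_col M F X (numM M 1)" unfolding homog_col_def
    proof (intro ballI impI)
      fix x y assume "x \<in> X" "y \<in> X" "qltM M x y"
      thus "pr (pr x y) (numM M 1) \<in> F" using agree[of x y] disagree[of x y] 1 by (cases "x \<prec> y") auto
    qed
    thus ?thesis using X by blast
  next
    case 2
    have "homog_col M F X (numM M 0)" unfolding homog_col_def
    proof (intro ballI impI)
      fix x y assume "x \<in> X" "y \<in> X" "qltM M x y"
      thus "pr (pr x y) (numM M 0) \<in> F" using agree[of x y] disagree[of x y] 2 by (cases "x \<prec> y") auto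
    qed
    moreover have "infiniteM M X" unfolding infiniteM_def
    proof
      fix n assume "n \<in> NN"
      moreover have "\<forall>y\<in>X. \<exists>z\<in>X. pr y z \<in> Lq"
      proof
        fix y assume "y \<in> X"
        then obtain z where "z \<in> X" "qltM M y z" using nomax by blast
        thus "\<exists>z\<in>X. pr y z \<in> Lq" using Lq_iff qN \<open>y \<in> X\<close> by blast
      qed
      ultimately show "\<exists>x\<in>X. n \<prec> x" by (rule unbounded[OF Lq_S X(1) x0 LP(1) LP(2), rotated])
    qed
    ultimately show ?thesis using X by blast
  next
    case 3
    have "\<forall>y\<in>X. \<exists>z\<in>X. pr y z \<in> Lq"
    proof
      fix y assume "y \<in> X"
      then obtain z where "z \<in> X" "qltM M y z" using nomax by blast
      thus "\<exists>z\<in>X. pr y z \<in> Lq" using Lq_iff qN \<open>y \<in> X\<close> by blast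
    qed
    then obtain T where T: "T \<in> SS" "T \<subseteq> X" "\<forall>n\<in>NN. \<exists>y\<in>T. n \<prec> y" "\<forall>y\<in>T. \<forall>y'\<in>T. pr y y' \<in> Lq \<longrightarrow> y \<prec> y'"
      using records[OF Lq_S X(1) x0 LP(1) LP(2) LP(3)] by blast
    have "homog_col M F T (numM M 0)" unfolding homog_col_def
    proof (intro ballI impI)
      fix x y assume xy: "x \<in> T" "y \<in> T" "qltM M x y"
      have xX: "x \<in> X" "y \<in> X" using xy T(2) by auto
      have "pr x y \<in> Lq" using Lq_iff[of x y] qN[OF xX(1)] qN[OF xX(2)] xy(3) by simp
      hence "x \<prec> y" using T(4) xy(1,2) by blast
      thus "pr (pr x y) (numM M 0) \<in> F" using agree[OF xX(1) xX(2) xy(3)] 3(1) by simp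
    qed
    moreover have "infiniteM M T" unfolding infiniteM_def using T by blast
    moreover have "T \<subseteq> QM M" using T(2) X(2) by blast
    ultimately show ?thesis using T(1) by blast
  next
    case 4
    have "\<forall>y\<in>X. \<exists>z\<in>X. pr y z \<in> Lq'"
    proof
      fix y assume "y \<in> X"
      then obtain z where "z \<in> X" "qltM M z y" using nomin by blast
      thus "\<exists>z\<in>X. pr y z \<in> Lq'" using Lq'_iff qN \<open>y \<in> X\<close> by blast
    qed
    then obtain T where T: "T \<in> SS" "T \<subseteq> X" "\<forall>n\<in>NN. \<exists>y\<in>T. n \<prec> y" "\<forall>y\<in>T. \<forall>y'\<in>T. pr y y' \<in> Lq' \<longrightarrow> y \<prec> y'"
      using records[OF Lq'_S X(1) x0 LP(4) LP(5) LP(6)] by blast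
    have "homog_col M F T (numM M 0)" unfolding homog_col_def
    proof (intro ballI impI)
      fix x y assume xy: "x \<in> T" "y \<in> T" "qltM M x y"
      have xX: "x \<in> X" "y \<in> X" using xy T(2) by auto
      have "pr y x \<in> Lq'" using Lq'_iff[of y x] qN[OF xX(1)] qN[OF xX(2)] xy(3) by simp
      hence "y \<prec> x" using T(4) xy(1,2) by blast
      hence "\<not> x \<prec> y" using lt_asym qN xX by blast
      thus "pr (pr x y) (numM M 0) \<in> F" using disagree[OF xX(1) xX(2) xy(3)] 4(2) by simp
    qed
    moreover have "infiniteM M T" unfolding infiniteM_def using T by blast
    moreover have "T \<subseteq> QM M" using T(2) X(2) by blast
    ultimately show ?thesis using T(1) by blast
  qed
qed

end

theorem theorem5p44:
  fixes M :: "'a l2"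
  assumes "RCA0 M" and "DT2_4_2 M"
  shows "ER2 M"
  unfolding ER2_def
proof (intro allI impI)
  fix F assume F: "colouring M 2 F"
  hence "F \<in> s_dom M" unfolding colouring_def by blast
  then interpret rca M F using assms(1) by unfold_locales
  show "\<exists>X\<in>s_dom M. X \<subseteq> QM M \<and> (infiniteM M X \<and> homog_col M F X (numM M 0) \<or> dloM M X \<and> homog_col M F X (numM M 1))"
    using main[OF F assms(2)] .
qed

end
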